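(* There is a universal constant $c_0>0$ such that for all universal constants $c_1,c_2$ with $0<c_2\le c_1\le c_0$ there exists a universal constant $c_3>0$ such that the following holds. Let $\delta\in(0,1)$, $\varepsilon\in(0,1]$ and $\gamma\in[1/2,1)$. Suppose the learning rates satisfy, for all $0\le t\le T$, $$\frac{1}{1+\frac{c_1(1-\gamma)T}{\log^2 T}}\le \eta_t\le \frac{1}{1+\frac{c_2(1-\gamma)t}{\log^2 T}},$$ and the number of iterations $T$ satisfies $$T\ge \frac{c_3(\log^3 T)\,\log\frac{|\mathcal S|T}{\delta}}{(1-\gamma)^3\varepsilon^2}.$$ If the initialization obeys $0\le V_0(s)\le \frac{1}{1-\gamma}$ for all $s\in\mathcal S$, then with probability at least $1-\delta$ the synchronous TD learning iterate satisfies $\max_{s\in\mathcal S}|V_T(s)-V^\star(s)|\le\varepsilon$.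
   Context: A Markov reward process (MRP) consists of a finite state space $\mathcal S$, a transition kernel $P:\mathcal S\to\Delta(\mathcal S)$, a reward function $r:\mathcal S\to[0,1]$ and a discount factor $\gamma\in(0,1)$. Its value function is $V^\star(s)=\mathbb E\big[\sum_{k\ge0}\gamma^k r(s_k)\mid s_0=s\big]$ where $s_{k+1}\sim P(\cdot\mid s_k)$. Synchronous TD learning: in each iteration $t=1,2,\dots,T$, for every $s\in\mathcal S$ an independent sample $s_t(s)\sim P(\cdot\mid s)$ is drawn (independent across states and iterations), and $V_t(s)=(1-\eta_t)V_{t-1}(s)+\eta_t\big(r(s)+\gamma V_{t-1}(s_t(s))\big)$ for all $s$, with learning rates $\eta_t\in(0,1]$. Logarithms are natural. *)

theory Defs
  imports "HOL-Probability.Probability"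
begin

primrec kstep :: "(nat \<Rightarrow> nat pmf) \<Rightarrow> nat \<Rightarrow> nat \<Rightarrow> nat pmf" where
  "kstep P 0 s = return_pmf s"
| "kstep P (Suc k) s = bind_pmf (kstep P k s) P"

(* V*(s) = E[ sum_k gamma^k r(s_k) | s_0 = s ], written via linearity of
   expectation as sum_k gamma^k E[r(s_k)] *)
definition Vstar :: "(nat \<Rightarrow> nat pmf) \<Rightarrow> (nat \<Rightarrow> real) \<Rightarrow> real \<Rightarrow> nat \<Rightarrow> real" where
  "Vstar P r \<gamma> s = (\<Sum>k. \<gamma> ^ k * measure_pmf.expectation (kstep P k s) r)"

(* Synchronous TD iterates. omega (t, s) is the sample s_t(s) ~ P(.|s). *)
primrec td :: "(nat \<Rightarrow> real) \<Rightarrow> real \<Rightarrow> (nat \<Rightarrow> real) \<Rightarrow> (nat \<Rightarrow> real)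
                 \<Rightarrow> (nat \<times> nat \<Rightarrow> nat) \<Rightarrow> nat \<Rightarrow> nat \<Rightarrow> real" where
  "td r \<gamma> \<eta> V0 \<omega> 0 s = V0 s"
| "td r \<gamma> \<eta> V0 \<omega> (Suc t) s =
     (1 - \<eta> (Suc t)) * td r \<gamma> \<eta> V0 \<omega> t s
     + \<eta> (Suc t) * (r s + \<gamma> * td r \<gamma> \<eta> V0 \<omega> t (\<omega> (Suc t, s)))"

definition samples :: "nat set \<Rightarrow> (nat \<Rightarrow> nat pmf) \<Rightarrow> nat \<Rightarrow> (nat \<times> nat \<Rightarrow> nat) pmf" where
  "samples S P T = Pi_pmf ({1..T} \<times> S) 0 (\<lambda>(t, s). P s)"

end

theory Submission
  imports Defs
begin

locale tdl =
  fixes S :: "nat set" and P :: "nat \<Rightarrow> nat pmf" and r :: "nat \<Rightarrow> real" and \<gamma> :: real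
    and \<eta> :: "nat \<Rightarrow> real" and V0 :: "nat \<Rightarrow> real" and T :: nat
  assumes finS: "finite S" and neS: "S \<noteq> {}" and supp: "\<And>s. s\<in>S \<Longrightarrow> set_pmf (P s) \<subseteq> S"
    and r01: "\<And>s. s\<in>S \<Longrightarrow> 0 \<le> r s \<and> r s \<le> 1"
    and gam0: "0 < \<gamma>" and gam1: "\<gamma> < 1"
    and eta01: "\<And>t. t \<le> T \<Longrightarrow> 0 < \<eta> t \<and> \<eta> t \<le> 1"
    and V0b: "\<And>s. s\<in>S \<Longrightarrow> 0 \<le> V0 s \<and> V0 s \<le> 1/(1-\<gamma>)"
begin

definition PV :: "(nat \<Rightarrow> real) \<Rightarrow> nat \<Rightarrow> real" where
  "PV v s = (\<Sum>x\<in>S. pmf (P s) x * v x)"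

abbreviation V where "V \<omega> t s \<equiv> td r \<gamma> \<eta> V0 \<omega> t s"

definition valid :: "(nat \<times> nat \<Rightarrow> nat) \<Rightarrow> nat \<Rightarrow> bool" where
  "valid \<omega> t \<longleftrightarrow> (\<forall>j\<in>{1..t}. \<forall>y\<in>S. \<omega> (j,y) \<in> S)"

lemma PV_lin: "PV (\<lambda>x. a * u x + b * v x) s = a * PV u s + b * PV v s"
  unfolding PV_def by (simp add: sum.distrib sum_distrib_left algebra_simps)

lemma PV_diff: "PV (\<lambda>x. u x - v x) s = PV u s - PV v s"
  unfolding PV_def by (simp add: sum_subtractf algebra_simps)

lemma PV_cmult: "PV (\<lambda>x. a * u x) s = a * PV u s"
  unfolding PV_def by (simp add: sum_distrib_left algebra_simps)

lemma sum_pmf1: "s \<in> S \<Longrightarrow> (\<Sum>x\<in>S. pmf (P s) x) = 1"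
  using sum_pmf_eq_1[OF finS supp] by auto

lemma PV_const: "s \<in> S \<Longrightarrow> PV (\<lambda>_. c) s = c"
  unfolding PV_def using sum_pmf1 by (simp add: sum_distrib_right[symmetric])

lemma PV_mono: "(\<And>x. x \<in> S \<Longrightarrow> u x \<le> v x) \<Longrightarrow> PV u s \<le> PV v s"
  unfolding PV_def by (intro sum_mono mult_left_mono) auto

lemma PV_cong: "(\<And>x. x \<in> S \<Longrightarrow> u x = v x) \<Longrightarrow> PV u s = PV v s"
  unfolding PV_def by (intro sum.cong) auto

lemma PV_exp: "s \<in> S \<Longrightarrow> measure_pmf.expectation (P s) f = PV f s"
  unfolding PV_def
  by (subst integral_measure_pmf_real[OF finS]) (use supp in \<open>auto simp: mult.commute\<close>)

lemma PV_bounds: "s \<in> S \<Longrightarrow> (\<And>x. x \<in> S \<Longrightarrow> a \<le> v x \<and> v x \<le> b) \<Longrightarrow> a \<le> PV v s \<and> PV v s \<le> b"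
  using PV_mono[of "\<lambda>_. a" v s] PV_mono[of v "\<lambda>_. b" s] PV_const by auto

lemma h_pos: "0 < 1 - \<gamma>" using gam1 by simp

lemma V_bounds: "valid \<omega> t \<Longrightarrow> t \<le> T \<Longrightarrow> s \<in> S \<Longrightarrow> 0 \<le> V \<omega> t s \<and> V \<omega> t s \<le> 1/(1-\<gamma>)"
proof (induction t arbitrary: s)
  case 0 then show ?case using V0b by simp
next
  case (Suc t)
  have vt: "valid \<omega> t" using Suc.prems(1) unfolding valid_def by auto
  have os: "\<omega> (Suc t, s) \<in> S" using Suc.prems unfolding valid_def by auto
  have a: "0 \<le> V \<omega> t s \<and> V \<omega> t s \<le> 1/(1-\<gamma>)" using Suc vt by simp
  have b: "0 \<le> V \<omega> t (\<omega> (Suc t, s)) \<and> V \<omega> t (\<omega> (Suc t, s)) \<le> 1/(1-\<gamma>)" using Suc.IH[OF vt _ os] Suc.prems by simp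
  have e: "0 < \<eta> (Suc t) \<and> \<eta> (Suc t) \<le> 1" using eta01 Suc.prems by simp
  have r: "0 \<le> r s \<and> r s \<le> 1" using r01 Suc.prems by simp
  define x where "x = V \<omega> t s"
  define y where "y = V \<omega> t (\<omega> (Suc t, s))"
  define n where "n = \<eta> (Suc t)"
  have hp: "0 < 1 - \<gamma>" using gam1 by simp
  have "r s + \<gamma> * y \<le> 1 + \<gamma> * (1/(1-\<gamma>))" using r b gam0 unfolding y_def
    by (intro add_mono mult_left_mono) auto
  also have "\<dots> = 1/(1-\<gamma>)" using hp by (simp add: field_simps)
  finally have u: "r s + \<gamma> * y \<le> 1/(1-\<gamma>)" .
  have l: "0 \<le> r s + \<gamma> * y" using r b gam0 unfolding y_def by auto
  have "(1 - n) * x + n * (r s + \<gamma> * y) \<le> (1-n) * (1/(1-\<gamma>)) + n * (1/(1-\<gamma>))"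
    using a e u unfolding x_def n_def by (intro add_mono mult_left_mono) auto
  also have "\<dots> = 1/(1-\<gamma>)" using hp by (simp add: field_simps)
  finally have "(1 - n) * x + n * (r s + \<gamma> * y) \<le> 1/(1-\<gamma>)" .
  moreover have "0 \<le> (1 - n) * x" using a e unfolding x_def n_def by simp
  moreover have "0 \<le> n * (r s + \<gamma> * y)" using e l unfolding n_def by simp
  ultimately show ?case unfolding x_def y_def n_def by simp
qed

lemma kstep_supp: "s \<in> S \<Longrightarrow> set_pmf (kstep P k s) \<subseteq> S"
  by (induction k) (use supp in \<open>auto simp: set_bind_pmf\<close>)

lemma kstep_Suc': "kstep P (Suc k) s = bind_pmf (P s) (\<lambda>x. kstep P k x)"
proof (induction k arbitrary: s)
  case 0 then show ?case by (simp add: bind_return_pmf bind_return_pmf')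
next
  case (Suc k)
  have "kstep P (Suc (Suc k)) s = bind_pmf (kstep P (Suc k) s) P" by simp
  also have "\<dots> = bind_pmf (bind_pmf (P s) (\<lambda>x. kstep P k x)) P" using Suc by simp
  also have "\<dots> = bind_pmf (P s) (\<lambda>x. bind_pmf (kstep P k x) P)" by (simp add: bind_assoc_pmf)
  finally show ?case by simp
qed

definition Er :: "nat \<Rightarrow> nat \<Rightarrow> real" where
  "Er k s = measure_pmf.expectation (kstep P k s) r"

lemma Er_sum: "s \<in> S \<Longrightarrow> Er k s = (\<Sum>y\<in>S. r y * pmf (kstep P k s) y)"
  unfolding Er_def by (rule integral_measure_pmf_real[OF finS]) (use kstep_supp in auto)

lemma Er_bounds: "s \<in> S \<Longrightarrow> 0 \<le> Er k s \<and> Er k s \<le> 1"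
proof -
  assume s: "s \<in> S"
  have "(\<Sum>y\<in>S. r y * pmf (kstep P k s) y) \<le> (\<Sum>y\<in>S. 1 * pmf (kstep P k s) y)"
    using r01 by (intro sum_mono mult_right_mono) auto
  also have "\<dots> = 1" using sum_pmf_eq_1[OF finS kstep_supp[OF s]] by simp
  finally show ?thesis using Er_sum[OF s] r01 by (auto intro!: sum_nonneg)
qed

lemma Er_Suc: "s \<in> S \<Longrightarrow> Er (Suc k) s = PV (Er k) s"
proof -
  assume s: "s \<in> S"
  have "Er (Suc k) s = (\<Sum>y\<in>S. r y * pmf (kstep P (Suc k) s) y)" by (rule Er_sum[OF s])
  also have "\<dots> = (\<Sum>y\<in>S. r y * (\<Sum>x\<in>S. pmf (kstep P k x) y * pmf (P s) x))"
    unfolding kstep_Suc' pmf_bind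
    by (intro sum.cong refl arg_cong2[where f="(*)"] integral_measure_pmf_real[OF finS]) (use supp s in auto)
  also have "\<dots> = (\<Sum>x\<in>S. pmf (P s) x * (\<Sum>y\<in>S. r y * pmf (kstep P k x) y))"
    by (simp add: sum_distrib_left mult_ac, rule sum.swap)
  also have "\<dots> = PV (Er k) s" unfolding PV_def by (intro sum.cong refl) (simp add: Er_sum)
  finally show ?thesis .
qed

definition Vs :: "nat \<Rightarrow> real" where "Vs s = Vstar P r \<gamma> s"

lemma summ_Er: "s \<in> S \<Longrightarrow> summable (\<lambda>k. \<gamma> ^ k * Er k s)"
proof -
  assume s: "s \<in> S"
  show ?thesis
    by (rule summable_comparison_test'[OF summable_geometric[of \<gamma>]])
       (use gam0 gam1 Er_bounds[OF s] in \<open>auto simp: abs_mult intro!: mult_left_le\<close>)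
qed

lemma Vs_eq: "Vs s = (\<Sum>k. \<gamma> ^ k * Er k s)"
  unfolding Vs_def Vstar_def Er_def by simp

lemma Vs_bounds: "s \<in> S \<Longrightarrow> 0 \<le> Vs s \<and> Vs s \<le> 1/(1-\<gamma>)"
proof -
  assume s: "s \<in> S"
  have "0 \<le> Vs s" unfolding Vs_eq
    by (rule suminf_nonneg[OF summ_Er[OF s]]) (use Er_bounds[OF s] gam0 in auto)
  moreover have "Vs s \<le> (\<Sum>k. \<gamma> ^ k)" unfolding Vs_eq
    by (rule suminf_le[OF _ summ_Er[OF s]]) (use Er_bounds[OF s] gam0 gam1 in \<open>auto intro!: mult_left_le\<close>)
  ultimately show ?thesis using suminf_geometric[of \<gamma>] gam0 gam1 by simp
qed

lemma Vs_bellman: "s \<in> S \<Longrightarrow> Vs s = r s + \<gamma> * PV Vs s"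
proof -
  assume s: "s \<in> S"
  have sm: "summable (\<lambda>k. \<gamma> ^ k * Er k s)" by (rule summ_Er[OF s])
  have "Vs s = (\<Sum>k. \<gamma> ^ Suc k * Er (Suc k) s) + \<gamma> ^ 0 * Er 0 s"
    unfolding Vs_eq using suminf_split_head[OF sm] by simp
  also have "\<gamma> ^ 0 * Er 0 s = r s" by (simp add: Er_def)
  also have "(\<Sum>k. \<gamma> ^ Suc k * Er (Suc k) s) = (\<Sum>k. \<gamma> * (\<Sum>x\<in>S. pmf (P s) x * (\<gamma> ^ k * Er k x)))"
    by (intro suminf_cong) (simp add: Er_Suc[OF s] PV_def sum_distrib_left algebra_simps)
  also have "\<dots> = \<gamma> * (\<Sum>k. (\<Sum>x\<in>S. pmf (P s) x * (\<gamma> ^ k * Er k x)))"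
    by (intro suminf_mult summable_sum summable_mult) (use summ_Er supp s in \<open>auto\<close>)
  also have "(\<Sum>k. (\<Sum>x\<in>S. pmf (P s) x * (\<gamma> ^ k * Er k x))) = (\<Sum>x\<in>S. (\<Sum>k. pmf (P s) x * (\<gamma> ^ k * Er k x)))"
    by (rule suminf_sum) (use summ_Er in \<open>auto intro!: summable_mult\<close>)
  also have "\<dots> = PV Vs s" unfolding PV_def
  proof (intro sum.cong refl)
    fix x assume x: "x \<in> S"
    show "(\<Sum>k. pmf (P s) x * (\<gamma> ^ k * Er k x)) = pmf (P s) x * Vs x"
      unfolding Vs_eq by (rule suminf_mult[OF summ_Er[OF x]])
  qed
  finally show ?thesis by simp
qed

lemma PV_sum: "PV (\<lambda>x. \<Sum>i\<in>I. f i x) s = (\<Sum>i\<in>I. PV (f i) s)"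
  unfolding PV_def by (simp add: sum_distrib_left, rule sum.swap)

lemma PV_add: "PV (\<lambda>x. u x + v x) s = PV u s + PV v s"
  unfolding PV_def by (simp add: sum.distrib algebra_simps)

lemma sum_lin2: "(\<Sum>i\<in>I. a * f i + b * g i) = a * sum f I + b * sum g I" for a b :: real
  by (simp add: sum.distrib sum_distrib_left[of a f I] sum_distrib_left[of b g I])

primrec W :: "nat \<Rightarrow> nat \<Rightarrow> nat \<Rightarrow> nat \<Rightarrow> real" where
  "W i 0 s s' = (if s = s' then 1 else 0)"
| "W i (Suc n) s s' = (1 - \<eta> (i + Suc n)) * W i n s s' + \<eta> (i + Suc n) * \<gamma> * (\<Sum>x\<in>S. pmf (P s) x * W i n x s')"

definition Wapp :: "nat \<Rightarrow> nat \<Rightarrow> (nat \<Rightarrow> real) \<Rightarrow> nat \<Rightarrow> real" where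
  "Wapp i n v s = (\<Sum>s'\<in>S. W i n s s' * v s')"

lemma Wapp_0: "s \<in> S \<Longrightarrow> Wapp i 0 v s = v s"
proof -
  assume s: "s \<in> S"
  have "Wapp i 0 v s = (\<Sum>s'\<in>S. if s = s' then v s' else 0)" unfolding Wapp_def by (intro sum.cong) auto
  also have "\<dots> = v s" using finS s by (simp add: sum.delta)
  finally show ?thesis .
qed

lemma Wapp_Suc: "Wapp i (Suc n) v s = (1 - \<eta> (i + Suc n)) * Wapp i n v s + \<eta> (i + Suc n) * \<gamma> * PV (Wapp i n v) s"
proof -
  have "Wapp i (Suc n) v s = (1 - \<eta> (i + Suc n)) * Wapp i n v s
      + \<eta> (i + Suc n) * \<gamma> * (\<Sum>s'\<in>S. (\<Sum>x\<in>S. pmf (P s) x * W i n x s') * v s')"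
  proof -
    have "Wapp i (Suc n) v s = (\<Sum>s'\<in>S. (1 - \<eta> (i + Suc n)) * (W i n s s' * v s') + (\<eta> (i + Suc n) * \<gamma>) * ((\<Sum>x\<in>S. pmf (P s) x * W i n x s') * v s'))"
      unfolding Wapp_def W.simps by (intro sum.cong refl) (simp add: algebra_simps)
    then show ?thesis unfolding sum_lin2 Wapp_def by simp
  qed
  also have "(\<Sum>s'\<in>S. (\<Sum>x\<in>S. pmf (P s) x * W i n x s') * v s') = PV (Wapp i n v) s"
    unfolding PV_def Wapp_def by (simp add: sum_distrib_left sum_distrib_right mult_ac, rule sum.swap)
  finally show ?thesis .
qed

lemma Wapp_lin: "Wapp i n (\<lambda>x. a * u x + b * v x) s = a * Wapp i n u s + b * Wapp i n v s"
  unfolding Wapp_def by (simp add: sum.distrib sum_distrib_left algebra_simps)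

lemma Wapp_diff: "Wapp i n (\<lambda>x. u x - v x) s = Wapp i n u s - Wapp i n v s"
  unfolding Wapp_def by (simp add: sum_subtractf algebra_simps)

lemma Wapp_cong: "(\<And>x. x \<in> S \<Longrightarrow> u x = v x) \<Longrightarrow> Wapp i n u s = Wapp i n v s"
  unfolding Wapp_def by (intro sum.cong) auto

lemma W_nonneg: "i + n \<le> T \<Longrightarrow> 0 \<le> W i n s s'"
proof (induction n arbitrary: s)
  case 0 then show ?case by simp
next
  case (Suc n)
  have e: "0 < \<eta> (i + Suc n) \<and> \<eta> (i + Suc n) \<le> 1" using eta01 Suc.prems by simp
  have "0 \<le> (\<Sum>x\<in>S. pmf (P s) x * W i n x s')" using Suc by (intro sum_nonneg mult_nonneg_nonneg) auto
  then show ?case using Suc e gam0 by simp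
qed

definition Rs :: "nat \<Rightarrow> nat \<Rightarrow> real" where
  "Rs i n = (\<Prod>j\<in>{i<..i+n}. 1 - \<eta> j * (1-\<gamma>))"

lemma Rs_Suc: "Rs i (Suc n) = (1 - \<eta> (i + Suc n) * (1-\<gamma>)) * Rs i n"
proof -
  have "{i<..i + Suc n} = insert (i + Suc n) {i<..i+n}" by auto
  then show ?thesis unfolding Rs_def by simp
qed

lemma W_rowsum: "s \<in> S \<Longrightarrow> (\<Sum>s'\<in>S. W i n s s') = Rs i n"
proof (induction n arbitrary: s)
  case 0 then show ?case using finS by (simp add: Rs_def sum.delta)
next
  case (Suc n)
  have "(\<Sum>s'\<in>S. W i (Suc n) s s') = (1 - \<eta> (i + Suc n)) * (\<Sum>s'\<in>S. W i n s s')
     + \<eta> (i + Suc n) * \<gamma> * (\<Sum>x\<in>S. pmf (P s) x * (\<Sum>s'\<in>S. W i n x s'))"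
    unfolding W.simps sum.distrib by (simp add: sum_distrib_left[symmetric], subst sum.swap, simp add: sum_distrib_left)
  also have "(\<Sum>x\<in>S. pmf (P s) x * (\<Sum>s'\<in>S. W i n x s')) = (\<Sum>x\<in>S. pmf (P s) x * Rs i n)"
    using Suc.IH by (intro sum.cong) auto
  also have "\<dots> = Rs i n" using sum_pmf1[OF Suc.prems] by (simp add: sum_distrib_right[symmetric])
  finally show ?case using Suc by (simp add: Rs_Suc algebra_simps)
qed

lemma Rs_bounds: "i + n \<le> T \<Longrightarrow> 0 \<le> Rs i n \<and> Rs i n \<le> 1"
proof -
  assume a: "i + n \<le> T"
  have "\<And>j. j \<in> {i<..i+n} \<Longrightarrow> 0 \<le> 1 - \<eta> j * (1-\<gamma>) \<and> 1 - \<eta> j * (1-\<gamma>) \<le> 1"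
  proof -
    fix j assume "j \<in> {i<..i+n}"
    then have "0 < \<eta> j \<and> \<eta> j \<le> 1" using eta01 a by auto
    moreover have "\<eta> j * (1-\<gamma>) \<le> 1 * 1" using calculation gam0 gam1 by (intro mult_mono) auto
    ultimately show "0 \<le> 1 - \<eta> j * (1-\<gamma>) \<and> 1 - \<eta> j * (1-\<gamma>) \<le> 1" using gam1 by simp
  qed
  then show ?thesis unfolding Rs_def by (auto intro: prod_nonneg prod_le_1)
qed

lemma W_le1: "s \<in> S \<Longrightarrow> s' \<in> S \<Longrightarrow> i + n \<le> T \<Longrightarrow> W i n s s' \<le> 1"
proof -
  assume a: "s \<in> S" "s' \<in> S" "i + n \<le> T"
  have "W i n s s' \<le> (\<Sum>s'\<in>S. W i n s s')"
    using a by (intro member_le_sum finS W_nonneg) auto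
  then show ?thesis using W_rowsum[OF a(1)] Rs_bounds[OF a(3)] by simp
qed

lemma Wapp_abs: "s \<in> S \<Longrightarrow> i + n \<le> T \<Longrightarrow> (\<And>x. x \<in> S \<Longrightarrow> \<bar>v x\<bar> \<le> B) \<Longrightarrow> \<bar>Wapp i n v s\<bar> \<le> Rs i n * B"
proof -
  assume a: "s \<in> S" "i + n \<le> T" "\<And>x. x \<in> S \<Longrightarrow> \<bar>v x\<bar> \<le> B"
  have "\<bar>Wapp i n v s\<bar> \<le> (\<Sum>s'\<in>S. \<bar>W i n s s' * v s'\<bar>)" unfolding Wapp_def by (rule sum_abs)
  also have "\<dots> \<le> (\<Sum>s'\<in>S. W i n s s' * B)"
    using a W_nonneg by (intro sum_mono) (auto simp: abs_mult intro!: mult_left_mono)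
  also have "\<dots> = Rs i n * B" using W_rowsum[OF a(1)] by (simp add: sum_distrib_right[symmetric])
  finally show ?thesis .
qed

lemma Wapp_mono: "i + n \<le> T \<Longrightarrow> (\<And>x. x \<in> S \<Longrightarrow> u x \<le> v x) \<Longrightarrow> Wapp i n u s \<le> Wapp i n v s"
  unfolding Wapp_def using W_nonneg by (intro sum_mono mult_left_mono) auto

lemma Wapp_const: "s \<in> S \<Longrightarrow> Wapp i n (\<lambda>_. c) s = Rs i n * c"
  unfolding Wapp_def using W_rowsum by (simp add: sum_distrib_right[symmetric])

definition err :: "(nat \<times> nat \<Rightarrow> nat) \<Rightarrow> nat \<Rightarrow> nat \<Rightarrow> real" where
  "err \<omega> t s = V \<omega> t s - Vs s"

definition xi :: "(nat \<times> nat \<Rightarrow> nat) \<Rightarrow> nat \<Rightarrow> nat \<Rightarrow> real" where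
  "xi \<omega> i s = V \<omega> (i - 1) (\<omega> (i, s)) - PV (V \<omega> (i - 1)) s"

lemma err_step: "s \<in> S \<Longrightarrow> err \<omega> (Suc t) s =
   (1 - \<eta> (Suc t)) * err \<omega> t s + \<eta> (Suc t) * \<gamma> * PV (err \<omega> t) s + \<eta> (Suc t) * \<gamma> * xi \<omega> (Suc t) s"
proof -
  assume s: "s \<in> S"
  have eq: "PV (err \<omega> t) s = PV (V \<omega> t) s - PV Vs s" unfolding err_def by (rule PV_diff)
  show ?thesis unfolding eq using Vs_bellman[OF s] unfolding err_def xi_def by (simp add: algebra_simps)
qed

lemma err_decomp: "s \<in> S \<Longrightarrow> err \<omega> (t0 + n) s = Wapp t0 n (err \<omega> t0) s
    + (\<Sum>i\<in>{t0<..t0+n}. \<eta> i * \<gamma> * Wapp i (t0 + n - i) (xi \<omega> i) s)"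
proof (induction n arbitrary: s)
  case 0 then show ?case by (simp add: Wapp_0)
next
  case (Suc n)
  define k where "k = t0 + Suc n"
  define D where "D = (\<lambda>x. \<Sum>i\<in>{t0<..t0+n}. \<eta> i * \<gamma> * Wapp i (t0 + n - i) (xi \<omega> i) x)"
  have IH: "\<And>x. x \<in> S \<Longrightarrow> err \<omega> (t0 + n) x = Wapp t0 n (err \<omega> t0) x + D x" using Suc.IH unfolding D_def by simp
  have "err \<omega> k s = (1 - \<eta> k) * err \<omega> (t0+n) s + \<eta> k * \<gamma> * PV (err \<omega> (t0+n)) s + \<eta> k * \<gamma> * xi \<omega> k s"
    unfolding k_def using err_step[OF Suc.prems, of \<omega> "t0+n"] by simp
  also have "PV (err \<omega> (t0+n)) s = PV (Wapp t0 n (err \<omega> t0)) s + PV D s"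
    using IH by (subst PV_cong[OF IH]) (auto simp: PV_add)
  also have "err \<omega> (t0+n) s = Wapp t0 n (err \<omega> t0) s + D s" using IH Suc.prems by simp
  finally have 1: "err \<omega> k s = Wapp t0 (Suc n) (err \<omega> t0) s + ((1 - \<eta> k) * D s + \<eta> k * \<gamma> * PV D s) + \<eta> k * \<gamma> * xi \<omega> k s"
    unfolding Wapp_Suc k_def by (simp add: algebra_simps)
  have 2: "(1 - \<eta> k) * D s + \<eta> k * \<gamma> * PV D s = (\<Sum>i\<in>{t0<..t0+n}. \<eta> i * \<gamma> * Wapp i (k - i) (xi \<omega> i) s)"
  proof -
    have "PV D s = (\<Sum>i\<in>{t0<..t0+n}. \<eta> i * \<gamma> * PV (Wapp i (t0 + n - i) (xi \<omega> i)) s)"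
      unfolding D_def PV_sum by (simp add: PV_cmult)
    then have "(1 - \<eta> k) * D s + \<eta> k * \<gamma> * PV D s = (\<Sum>i\<in>{t0<..t0+n}. \<eta> i * \<gamma> *
         ((1 - \<eta> k) * Wapp i (t0 + n - i) (xi \<omega> i) s + \<eta> k * \<gamma> * PV (Wapp i (t0 + n - i) (xi \<omega> i)) s))"
    proof -
      have "(\<Sum>i\<in>{t0<..t0+n}. \<eta> i * \<gamma> *
         ((1 - \<eta> k) * Wapp i (t0 + n - i) (xi \<omega> i) s + \<eta> k * \<gamma> * PV (Wapp i (t0 + n - i) (xi \<omega> i)) s))
        = (\<Sum>i\<in>{t0<..t0+n}. (1 - \<eta> k) * (\<eta> i * \<gamma> * Wapp i (t0 + n - i) (xi \<omega> i) s) + (\<eta> k * \<gamma>) * (\<eta> i * \<gamma> * PV (Wapp i (t0 + n - i) (xi \<omega> i)) s))"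
        by (intro sum.cong refl) (simp add: algebra_simps)
      then have X: "(\<Sum>i\<in>{t0<..t0+n}. \<eta> i * \<gamma> *
         ((1 - \<eta> k) * Wapp i (t0 + n - i) (xi \<omega> i) s + \<eta> k * \<gamma> * PV (Wapp i (t0 + n - i) (xi \<omega> i)) s))
        = (1 - \<eta> k) * (\<Sum>i\<in>{t0<..t0+n}. \<eta> i * \<gamma> * Wapp i (t0 + n - i) (xi \<omega> i) s) + (\<eta> k * \<gamma>) * (\<Sum>i\<in>{t0<..t0+n}. \<eta> i * \<gamma> * PV (Wapp i (t0 + n - i) (xi \<omega> i)) s)"
        unfolding sum_lin2 .
      have Ds: "D s = (\<Sum>i\<in>{t0<..t0+n}. \<eta> i * \<gamma> * Wapp i (t0 + n - i) (xi \<omega> i) s)" unfolding D_def ..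
      show ?thesis using X Ds \<open>PV D s = _\<close> by simp
    qed
    also have "\<dots> = (\<Sum>i\<in>{t0<..t0+n}. \<eta> i * \<gamma> * Wapp i (k - i) (xi \<omega> i) s)"
    proof (intro sum.cong refl)
      fix i assume i: "i \<in> {t0<..t0+n}"
      then have "k - i = Suc (t0 + n - i)" "i + Suc (t0 + n - i) = k" unfolding k_def by auto
      then show "\<eta> i * \<gamma> * ((1 - \<eta> k) * Wapp i (t0 + n - i) (xi \<omega> i) s + \<eta> k * \<gamma> * PV (Wapp i (t0 + n - i) (xi \<omega> i)) s)
          = \<eta> i * \<gamma> * Wapp i (k - i) (xi \<omega> i) s" by (simp add: Wapp_Suc)
    qed
    finally show ?thesis .
  qed
  have 3: "{t0<..t0 + Suc n} = insert k {t0<..t0+n}" unfolding k_def by auto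
  have "err \<omega> k s = Wapp t0 (Suc n) (err \<omega> t0) s + (\<Sum>i\<in>{t0<..t0 + Suc n}. \<eta> i * \<gamma> * Wapp i (k - i) (xi \<omega> i) s)"
    unfolding 1 2 3 using Suc.prems by (simp add: Wapp_0 k_def)
  then show ?case unfolding k_def by simp
qed

lemma telescope: "s \<in> S \<Longrightarrow> (\<Sum>i\<in>{t0<..t0+n}. \<eta> i * Wapp i (t0 + n - i) (\<lambda>x. y x - \<gamma> * PV y x) s)
   = y s - Wapp t0 n y s"
proof (induction n arbitrary: s)
  case 0 then show ?case by (simp add: Wapp_0)
next
  case (Suc n)
  define k where "k = t0 + Suc n"
  define u where "u = (\<lambda>x. y x - \<gamma> * PV y x)"
  define D where "D = (\<lambda>x. \<Sum>i\<in>{t0<..t0+n}. \<eta> i * Wapp i (t0 + n - i) u x)"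
  have IH: "\<And>x. x \<in> S \<Longrightarrow> D x = y x - Wapp t0 n y x" using Suc.IH unfolding D_def u_def by simp
  have 3: "{t0<..t0 + Suc n} = insert k {t0<..t0+n}" unfolding k_def by auto
  have "(\<Sum>i\<in>{t0<..t0 + Suc n}. \<eta> i * Wapp i (k - i) u s) = \<eta> k * u s + (\<Sum>i\<in>{t0<..t0+n}. \<eta> i * Wapp i (k - i) u s)"
    unfolding 3 using Suc.prems by (simp add: Wapp_0 k_def)
  also have "(\<Sum>i\<in>{t0<..t0+n}. \<eta> i * Wapp i (k - i) u s) = (\<Sum>i\<in>{t0<..t0+n}. \<eta> i *
         ((1 - \<eta> k) * Wapp i (t0 + n - i) u s + \<eta> k * \<gamma> * PV (Wapp i (t0 + n - i) u) s))"
  proof (intro sum.cong refl)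
    fix i assume i: "i \<in> {t0<..t0+n}"
    then have "k - i = Suc (t0 + n - i)" "i + Suc (t0 + n - i) = k" unfolding k_def by auto
    then show "\<eta> i * Wapp i (k - i) u s = \<eta> i * ((1 - \<eta> k) * Wapp i (t0 + n - i) u s + \<eta> k * \<gamma> * PV (Wapp i (t0 + n - i) u) s)"
      by (simp add: Wapp_Suc)
  qed
  also have "\<dots> = (1 - \<eta> k) * D s + \<eta> k * \<gamma> * PV D s"
  proof -
    have "PV D s = (\<Sum>i\<in>{t0<..t0+n}. \<eta> i * PV (Wapp i (t0 + n - i) u) s)"
      unfolding D_def PV_sum by (simp add: PV_cmult)
    moreover have "(\<Sum>i\<in>{t0<..t0+n}. \<eta> i *
         ((1 - \<eta> k) * Wapp i (t0 + n - i) u s + \<eta> k * \<gamma> * PV (Wapp i (t0 + n - i) u) s))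
       = (\<Sum>i\<in>{t0<..t0+n}. (1 - \<eta> k) * (\<eta> i * Wapp i (t0 + n - i) u s) + (\<eta> k * \<gamma>) * (\<eta> i * PV (Wapp i (t0 + n - i) u) s))"
      by (intro sum.cong refl) (simp add: algebra_simps)
    ultimately show ?thesis unfolding sum_lin2 D_def by simp
  qed
  also have "PV D s = PV (\<lambda>x. y x - Wapp t0 n y x) s" by (rule PV_cong) (simp add: IH)
  also have "D s = y s - Wapp t0 n y s" using IH Suc.prems by simp
  finally have "(\<Sum>i\<in>{t0<..t0 + Suc n}. \<eta> i * Wapp i (k - i) u s) =
     \<eta> k * u s + ((1 - \<eta> k) * (y s - Wapp t0 n y s) + \<eta> k * \<gamma> * PV (\<lambda>x. y x - Wapp t0 n y x) s)" .
  also have "\<dots> = y s - Wapp t0 (Suc n) y s"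
    unfolding Wapp_Suc PV_diff u_def k_def by (simp add: algebra_simps)
  finally show ?case unfolding k_def u_def by simp
qed

lemma PV_var: "s \<in> S \<Longrightarrow> PV (\<lambda>x. (u x - PV u s)\<^sup>2) s = PV (\<lambda>x. (u x)\<^sup>2) s - (PV u s)\<^sup>2"
proof -
  assume s: "s \<in> S"
  have "PV (\<lambda>x. (u x - PV u s)\<^sup>2) s = PV (\<lambda>x. ((u x)\<^sup>2 + (- 2 * PV u s) * u x) + (PV u s)\<^sup>2) s"
    by (rule PV_cong) (simp add: power2_eq_square algebra_simps)
  also have "\<dots> = PV (\<lambda>x. (u x)\<^sup>2 + (- 2 * PV u s) * u x) s + (PV u s)\<^sup>2"
    by (subst PV_add) (simp add: PV_const[OF s])
  also have "PV (\<lambda>x. (u x)\<^sup>2 + (- 2 * PV u s) * u x) s = PV (\<lambda>x. (u x)\<^sup>2) s + (- 2 * PV u s) * PV u s"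
    by (subst PV_add) (simp only: PV_cmult)
  finally show ?thesis by (simp add: power2_eq_square)
qed

lemma sq_sum_le: "(a + b)\<^sup>2 \<le> 2 * a\<^sup>2 + 2 * (b::real)\<^sup>2"
proof -
  have "0 \<le> (a - b)\<^sup>2" by simp
  then show ?thesis by (simp add: power2_eq_square algebra_simps)
qed

definition varS :: "nat \<Rightarrow> real" where
  "varS s = PV (\<lambda>x. (Vs x)\<^sup>2) s - (PV Vs s)\<^sup>2"

lemma varS_pt: "s \<in> S \<Longrightarrow> \<gamma>\<^sup>2 * varS s \<le> 2 * Vs s - ((Vs s)\<^sup>2 - \<gamma> * PV (\<lambda>x. (Vs x)\<^sup>2) s)"
proof -
  assume s: "s \<in> S"
  have b: "\<gamma> * PV Vs s = Vs s - r s" using Vs_bellman[OF s] by simp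
  have q0: "0 \<le> PV (\<lambda>x. (Vs x)\<^sup>2) s" using PV_mono[of "\<lambda>_. 0" "\<lambda>x. (Vs x)\<^sup>2" s] PV_const[OF s] by simp
  have "\<gamma> * PV (\<lambda>x. (Vs x)\<^sup>2) s \<le> PV (\<lambda>x. (Vs x)\<^sup>2) s"
    by (rule mult_left_le_one_le) (use q0 gam0 gam1 in auto)
  then have "\<gamma> * (\<gamma> * PV (\<lambda>x. (Vs x)\<^sup>2) s) \<le> \<gamma> * PV (\<lambda>x. (Vs x)\<^sup>2) s"
    using gam0 by (intro mult_left_mono) auto
  then have "\<gamma>\<^sup>2 * PV (\<lambda>x. (Vs x)\<^sup>2) s \<le> \<gamma> * PV (\<lambda>x. (Vs x)\<^sup>2) s"
    by (simp add: power2_eq_square mult.assoc)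
  moreover have "\<gamma>\<^sup>2 * (PV Vs s)\<^sup>2 = (Vs s - r s)\<^sup>2" using b by (simp add: power_mult_distrib[symmetric])
  moreover have "0 \<le> r s" "r s \<le> 1" "0 \<le> Vs s" using r01[OF s] Vs_bounds[OF s] by auto
  moreover have "r s * Vs s \<le> Vs s" using r01[OF s] Vs_bounds[OF s] by (simp add: mult_left_le_one_le)
  moreover have "0 \<le> (r s)\<^sup>2" by simp
  moreover have "(Vs s - r s)\<^sup>2 = (Vs s)\<^sup>2 - 2 * (r s * Vs s) + (r s)\<^sup>2" by (simp add: power2_diff mult.commute)
  moreover have "\<gamma>\<^sup>2 * varS s = \<gamma>\<^sup>2 * PV (\<lambda>x. (Vs x)\<^sup>2) s - \<gamma>\<^sup>2 * (PV Vs s)\<^sup>2"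
    unfolding varS_def by (simp add: right_diff_distrib)
  ultimately show ?thesis by linarith
qed

lemma tv_bound: "s \<in> S \<Longrightarrow> t0 + n \<le> T \<Longrightarrow>
   (\<Sum>i\<in>{t0<..t0+n}. \<eta> i * Wapp i (t0 + n - i) (\<lambda>x. \<gamma>\<^sup>2 * varS x) s) \<le> 3 / (1-\<gamma>)\<^sup>2"
proof -
  assume s: "s \<in> S" and T: "t0 + n \<le> T"
  define q where "q = (\<lambda>x. (Vs x)\<^sup>2)"
  define h where "h = 1 - \<gamma>"
  have hp: "0 < h" using gam1 h_def by simp
  have eta0: "\<And>i. i \<in> {t0<..t0+n} \<Longrightarrow> 0 \<le> \<eta> i" using eta01 T by (simp add: less_imp_le)
  have "(\<Sum>i\<in>{t0<..t0+n}. \<eta> i * Wapp i (t0 + n - i) (\<lambda>x. \<gamma>\<^sup>2 * varS x) s) \<le>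
        (\<Sum>i\<in>{t0<..t0+n}. \<eta> i * Wapp i (t0 + n - i) (\<lambda>x. 2 * (1/h) * 1 + (-1) * (q x - \<gamma> * PV q x)) s)"
  proof (intro sum_mono mult_left_mono eta0)
    fix i assume i: "i \<in> {t0<..t0+n}"
    show "Wapp i (t0 + n - i) (\<lambda>x. \<gamma>\<^sup>2 * varS x) s \<le> Wapp i (t0 + n - i) (\<lambda>x. 2 * (1/h) * 1 + (-1) * (q x - \<gamma> * PV q x)) s"
    proof (rule Wapp_mono)
      show "i + (t0 + n - i) \<le> T" using i T by auto
      fix x assume x: "x \<in> S"
      have "Vs x \<le> 1/h" using Vs_bounds[OF x] h_def by simp
      then show "\<gamma>\<^sup>2 * varS x \<le> 2 * (1/h) * 1 + (-1) * (q x - \<gamma> * PV q x)"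
        using varS_pt[OF x] unfolding q_def by simp
    qed
  qed (auto)
  also have "\<dots> = 2 * (1/h) * (\<Sum>i\<in>{t0<..t0+n}. \<eta> i * Wapp i (t0 + n - i) (\<lambda>x. 1) s)
       + (-1) * (\<Sum>i\<in>{t0<..t0+n}. \<eta> i * Wapp i (t0 + n - i) (\<lambda>x. q x - \<gamma> * PV q x) s)"
  proof -
    have "(\<Sum>i\<in>{t0<..t0+n}. \<eta> i * Wapp i (t0 + n - i) (\<lambda>x. 2 * (1/h) * 1 + (-1) * (q x - \<gamma> * PV q x)) s)
      = (\<Sum>i\<in>{t0<..t0+n}. (2 * (1/h)) * (\<eta> i * Wapp i (t0 + n - i) (\<lambda>x. 1) s) + (-1) * (\<eta> i * Wapp i (t0 + n - i) (\<lambda>x. q x - \<gamma> * PV q x) s))"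
      unfolding Wapp_lin by (intro sum.cong refl) (simp add: algebra_simps)
    then show ?thesis unfolding sum_lin2 .
  qed
  also have "(\<Sum>i\<in>{t0<..t0+n}. \<eta> i * Wapp i (t0 + n - i) (\<lambda>x. q x - \<gamma> * PV q x) s) = q s - Wapp t0 n q s"
    by (rule telescope[OF s])
  also have "(\<Sum>i\<in>{t0<..t0+n}. \<eta> i * Wapp i (t0 + n - i) (\<lambda>x. 1) s)
      = (\<Sum>i\<in>{t0<..t0+n}. \<eta> i * Wapp i (t0 + n - i) (\<lambda>x. (\<lambda>_. 1/h) x - \<gamma> * PV (\<lambda>_. 1/h) x) s)"
  proof (intro sum.cong refl arg_cong2[where f="(*)"] Wapp_cong)
    fix x assume x: "x \<in> S"
    show "1 = 1/h - \<gamma> * PV (\<lambda>_. 1/h) x" using PV_const[OF x] hp h_def by (simp add: field_simps)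
  qed
  also have "\<dots> = 1/h - Wapp t0 n (\<lambda>_. 1/h) s" by (rule telescope[OF s])
  also have "Wapp t0 n (\<lambda>_. 1/h) s = Rs t0 n * (1/h)" by (rule Wapp_const[OF s])
  finally have 1: "(\<Sum>i\<in>{t0<..t0+n}. \<eta> i * Wapp i (t0 + n - i) (\<lambda>x. \<gamma>\<^sup>2 * varS x) s)
     \<le> 2 * (1/h) * (1/h - Rs t0 n * (1/h)) + (-1) * (q s - Wapp t0 n q s)" .
  have R: "0 \<le> Rs t0 n" "Rs t0 n \<le> 1" using Rs_bounds[OF T] by auto
  have "Wapp t0 n q s \<le> Rs t0 n * (1/h)\<^sup>2"
  proof -
    have "\<bar>Wapp t0 n q s\<bar> \<le> Rs t0 n * (1/h)\<^sup>2"
    proof (rule Wapp_abs[OF s T])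
      fix x assume x: "x \<in> S"
      show "\<bar>q x\<bar> \<le> (1/h)\<^sup>2" using Vs_bounds[OF x] h_def unfolding q_def by (simp add: power_mono)
    qed
    then show ?thesis by simp
  qed
  also have "\<dots> \<le> (1/h)\<^sup>2" using R by (simp add: mult_left_le_one_le)
  finally have 2: "Wapp t0 n q s \<le> (1/h)\<^sup>2" .
  have 3: "0 \<le> q s" unfolding q_def by simp
  have 4: "2 * (1/h) * (1/h - Rs t0 n * (1/h)) \<le> 2 * (1/h) * (1/h)"
    using R hp by (intro mult_left_mono) auto
  have "2 * (1/h) * (1/h - Rs t0 n * (1/h)) + (-1) * (q s - Wapp t0 n q s) \<le> 2 * (1/h) * (1/h) + (1/h)\<^sup>2"
    using 2 3 4 by simp
  also have "\<dots> = 3 / h\<^sup>2" by (simp add: power2_eq_square field_simps)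
  finally show ?thesis using 1 h_def by simp
qed

lemma xi_var: "s \<in> S \<Longrightarrow> (\<And>x. x \<in> S \<Longrightarrow> \<bar>u x - Vs x\<bar> \<le> B) \<Longrightarrow>
   PV (\<lambda>x. (u x - PV u s)\<^sup>2) s \<le> 2 * varS s + 2 * B\<^sup>2"
proof -
  assume s: "s \<in> S" and B: "\<And>x. x \<in> S \<Longrightarrow> \<bar>u x - Vs x\<bar> \<le> B"
  define d where "d = (\<lambda>x. u x - Vs x)"
  have "PV (\<lambda>x. (u x - PV u s)\<^sup>2) s \<le> PV (\<lambda>x. 2 * (Vs x - PV Vs s)\<^sup>2 + 2 * (d x - PV d s)\<^sup>2) s"
  proof (rule PV_mono)
    fix x assume "x \<in> S"
    have "PV u s = PV Vs s + PV d s" unfolding d_def PV_add[symmetric] by (rule PV_cong) simp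
    then have "u x - PV u s = (Vs x - PV Vs s) + (d x - PV d s)" unfolding d_def by simp
    then show "(u x - PV u s)\<^sup>2 \<le> 2 * (Vs x - PV Vs s)\<^sup>2 + 2 * (d x - PV d s)\<^sup>2"
      by (simp add: sq_sum_le)
  qed
  also have "\<dots> = 2 * varS s + 2 * (PV (\<lambda>x. (d x)\<^sup>2) s - (PV d s)\<^sup>2)"
    unfolding PV_lin[of 2 _ 2, simplified] PV_var[OF s] varS_def by simp
  finally have 1: "PV (\<lambda>x. (u x - PV u s)\<^sup>2) s \<le> 2 * varS s + 2 * (PV (\<lambda>x. (d x)\<^sup>2) s - (PV d s)\<^sup>2)" .
  have "PV (\<lambda>x. (d x)\<^sup>2) s \<le> PV (\<lambda>_. B\<^sup>2) s"
  proof (rule PV_mono)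
    fix x assume x: "x \<in> S"
    have "\<bar>d x\<bar>\<^sup>2 \<le> B\<^sup>2" using B[OF x] unfolding d_def by (intro power_mono) auto
    then show "(d x)\<^sup>2 \<le> B\<^sup>2" by simp
  qed
  also have "PV (\<lambda>_. B\<^sup>2) s = B\<^sup>2" by (rule PV_const[OF s])
  finally have 2: "PV (\<lambda>x. (d x)\<^sup>2) s \<le> B\<^sup>2" .
  have 3: "0 \<le> (PV d s)\<^sup>2" by simp
  have 4: "PV (\<lambda>x. (d x)\<^sup>2) s - (PV d s)\<^sup>2 \<le> B\<^sup>2" using 2 3 by linarith
  show ?thesis by (rule order.trans[OF 1]) (use 4 in simp)
qed

end

lemma exp_quad: fixes y :: real assumes y1: "y \<le> 1" shows "exp y \<le> 1 + y + y\<^sup>2"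
proof (cases "0 \<le> y")
  case True
  then show ?thesis using exp_bound y1 by auto
next
  case False
  define z where "z = - y"
  have z: "0 < z" using False z_def by simp
  have "1 + z \<le> exp z" by (rule exp_ge_add_one_self)
  have "exp y = 1 / exp z" unfolding z_def by (simp add: exp_minus field_simps)
  also have "\<dots> \<le> 1 / (1 + z)" using \<open>1 + z \<le> exp z\<close> z by (intro divide_left_mono) auto
  also have "\<dots> \<le> 1 - z + z\<^sup>2"
  proof -
    have "1 \<le> (1 - z + z\<^sup>2) * (1 + z)" using z by (simp add: power2_eq_square algebra_simps)
    then show ?thesis using z by (simp add: divide_le_eq)
  qed
  finally show ?thesis unfolding z_def by simp
qed

lemma mgf_bound:
  fixes p :: "'a pmf" and f :: "'a \<Rightarrow> real"
  assumes fin: "finite (set_pmf p)" and m0: "measure_pmf.expectation p f = 0"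
    and b: "\<And>x. x \<in> set_pmf p \<Longrightarrow> \<bar>lam * f x\<bar> \<le> 1"
  shows "measure_pmf.expectation p (\<lambda>x. exp (lam * f x)) \<le> exp (lam\<^sup>2 * measure_pmf.expectation p (\<lambda>x. (f x)\<^sup>2))"
proof -
  have int: "\<And>g :: 'a \<Rightarrow> real. integrable p g" by (rule integrable_measure_pmf_finite[OF fin])
  have "measure_pmf.expectation p (\<lambda>x. exp (lam * f x)) \<le> measure_pmf.expectation p (\<lambda>x. 1 + lam * f x + lam\<^sup>2 * (f x)\<^sup>2)"
  proof (rule integral_mono_AE[OF int int])
    show "AE x in measure_pmf p. exp (lam * f x) \<le> 1 + lam * f x + lam\<^sup>2 * (f x)\<^sup>2"
    proof (rule AE_pmfI)
      fix x assume "x \<in> set_pmf p"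
      then have "lam * f x \<le> 1" using b by (simp add: abs_le_iff)
      then show "exp (lam * f x) \<le> 1 + lam * f x + lam\<^sup>2 * (f x)\<^sup>2"
        using exp_quad[of "lam * f x"] by (simp add: power_mult_distrib)
    qed
  qed
  also have "\<dots> = 1 + lam * measure_pmf.expectation p f + lam\<^sup>2 * measure_pmf.expectation p (\<lambda>x. (f x)\<^sup>2)"
    using int by (simp add: Bochner_Integration.integral_add)
  also have "\<dots> = 1 + lam\<^sup>2 * measure_pmf.expectation p (\<lambda>x. (f x)\<^sup>2)" using m0 by simp
  also have "\<dots> \<le> exp (lam\<^sup>2 * measure_pmf.expectation p (\<lambda>x. (f x)\<^sup>2))"
    by (rule exp_ge_add_one_self[unfolded add.commute[of _ 1]])
  finally show ?thesis .
qed

lemma samples_split: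
  assumes "finite S"
  shows "samples S P (Suc m) = map_pmf (\<lambda>(f,g) x. if x \<in> {1..m} \<times> S then f x else g x)
     (pair_pmf (samples S P m) (Pi_pmf ({Suc m} \<times> S) 0 (\<lambda>(t, s). P s)))"
proof -
  have e: "{1..Suc m} \<times> S = {1..m} \<times> S \<union> {Suc m} \<times> S" by auto
  show ?thesis unfolding samples_def e
    by (rule Pi_pmf_union) (use assms in auto)
qed

lemma samples_supp:
  assumes "finite S" "\<omega> \<in> set_pmf (samples S P m)"
  shows "\<And>x. x \<notin> {1..m} \<times> S \<Longrightarrow> \<omega> x = 0"
proof -
  have "set_pmf (samples S P m) \<subseteq> {f. \<forall>x. x \<notin> {1..m} \<times> S \<longrightarrow> f x = 0}"
    unfolding samples_def by (rule set_Pi_pmf_subset) (use assms in auto)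
  then show "\<And>x. x \<notin> {1..m} \<times> S \<Longrightarrow> \<omega> x = 0" using assms(2) by blast
qed

lemma inner_mgf:
  fixes S :: "nat set" and P :: "nat \<Rightarrow> nat pmf" and H :: "nat \<Rightarrow> nat \<Rightarrow> real" and k :: nat
  assumes finS: "finite S" and supp: "\<And>s. s \<in> S \<Longrightarrow> set_pmf (P s) \<subseteq> S"
    and mean: "\<And>s'. s' \<in> S \<Longrightarrow> measure_pmf.expectation (P s') (H s') = 0"
    and bnd: "\<And>s' x. s' \<in> S \<Longrightarrow> x \<in> set_pmf (P s') \<Longrightarrow> \<bar>lam * H s' x\<bar> \<le> 1"
    and var: "\<And>s'. s' \<in> S \<Longrightarrow> measure_pmf.expectation (P s') (\<lambda>x. (H s' x)\<^sup>2) \<le> vv s'"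
  shows "(\<integral>\<^sup>+g. ennreal (exp (lam * (\<Sum>s'\<in>S. H s' (g (k, s'))))) \<partial>Pi_pmf ({k} \<times> S) 0 (\<lambda>(t, s). P s))
     \<le> ennreal (exp (lam\<^sup>2 * (\<Sum>s'\<in>S. vv s')))"
proof -
  define h where "h = (\<lambda>(x::nat\<times>nat) (y::nat). ennreal (exp (lam * H (snd x) y)))"
  have finA: "finite ({k} \<times> S)" using finS by simp
  have inj: "inj_on (\<lambda>s'. (k, s')) S" by (auto simp: inj_on_def)
  have img: "(\<lambda>s'. (k, s')) ` S = {k} \<times> S" by auto
  have eq1: "\<And>g. ennreal (exp (lam * (\<Sum>s'\<in>S. H s' (g (k, s'))))) = (\<Prod>x\<in>{k} \<times> S. h x (g x))"
  proof -
    fix g :: "nat \<times> nat \<Rightarrow> nat"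
    have "exp (lam * (\<Sum>s'\<in>S. H s' (g (k, s')))) = (\<Prod>s'\<in>S. exp (lam * H s' (g (k, s'))))"
      by (simp add: sum_distrib_left exp_sum[OF finS])
    then have "ennreal (exp (lam * (\<Sum>s'\<in>S. H s' (g (k, s'))))) = (\<Prod>s'\<in>S. ennreal (exp (lam * H s' (g (k, s')))))"
      by (simp add: prod_ennreal)
    also have "\<dots> = (\<Prod>x\<in>{k} \<times> S. h x (g x))"
      unfolding img[symmetric] by (subst prod.reindex[OF inj]) (simp add: h_def)
    finally show "ennreal (exp (lam * (\<Sum>s'\<in>S. H s' (g (k, s'))))) = (\<Prod>x\<in>{k} \<times> S. h x (g x))" .
  qed
  have "(\<integral>\<^sup>+g. ennreal (exp (lam * (\<Sum>s'\<in>S. H s' (g (k, s'))))) \<partial>Pi_pmf ({k} \<times> S) 0 (\<lambda>(t, s). P s))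
      = (\<integral>\<^sup>+g. (\<Prod>x\<in>{k} \<times> S. h x (g x)) \<partial>Pi_pmf ({k} \<times> S) 0 (\<lambda>(t, s). P s))"
    by (simp only: eq1)
  also have "\<dots> = (\<Prod>x\<in>{k} \<times> S. nn_integral ((\<lambda>(t, s). P s) x) (h x))"
    by (rule nn_integral_prod_Pi_pmf[OF finA])
  also have "\<dots> = (\<Prod>s'\<in>S. nn_integral (P s') (h (k, s')))"
    unfolding img[symmetric] by (subst prod.reindex[OF inj]) simp
  also have "\<dots> = (\<Prod>s'\<in>S. ennreal (measure_pmf.expectation (P s') (\<lambda>y. exp (lam * H s' y))))"
  proof (intro prod.cong refl)
    fix s' assume s': "s' \<in> S"
    have fin: "finite (set_pmf (P s'))" using supp[OF s'] finS by (rule finite_subset)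
    show "nn_integral (P s') (h (k, s')) = ennreal (measure_pmf.expectation (P s') (\<lambda>y. exp (lam * H s' y)))"
      unfolding h_def by (simp, intro nn_integral_eq_integral integrable_measure_pmf_finite[OF fin]) auto
  qed
  also have "\<dots> = ennreal (\<Prod>s'\<in>S. measure_pmf.expectation (P s') (\<lambda>y. exp (lam * H s' y)))"
    by (rule prod_ennreal) (auto intro!: Bochner_Integration.integral_nonneg)
  also have "\<dots> \<le> ennreal (\<Prod>s'\<in>S. exp (lam\<^sup>2 * vv s'))"
  proof (intro ennreal_leI prod_mono conjI)
    fix s' assume s': "s' \<in> S"
    have fin: "finite (set_pmf (P s'))" using supp[OF s'] finS by (rule finite_subset)
    show "0 \<le> measure_pmf.expectation (P s') (\<lambda>y. exp (lam * H s' y))"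
      by (auto intro!: Bochner_Integration.integral_nonneg)
    have "measure_pmf.expectation (P s') (\<lambda>y. exp (lam * H s' y)) \<le> exp (lam\<^sup>2 * measure_pmf.expectation (P s') (\<lambda>x. (H s' x)\<^sup>2))"
      by (rule mgf_bound[OF fin mean[OF s'] bnd[OF s']])
    also have "\<dots> \<le> exp (lam\<^sup>2 * vv s')" using var[OF s'] by (simp add: mult_left_mono)
    finally show "measure_pmf.expectation (P s') (\<lambda>y. exp (lam * H s' y)) \<le> exp (lam\<^sup>2 * vv s')" .
  qed
  also have "(\<Prod>s'\<in>S. exp (lam\<^sup>2 * vv s')) = exp (lam\<^sup>2 * (\<Sum>s'\<in>S. vv s'))"
    by (simp add: sum_distrib_left exp_sum[OF finS])
  finally show ?thesis .
qed

lemma moment: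
  fixes S :: "nat set" and P :: "nat \<Rightarrow> nat pmf" and F :: "nat \<Rightarrow> (nat \<times> nat \<Rightarrow> nat) \<Rightarrow> nat \<Rightarrow> nat \<Rightarrow> real"
    and vv :: "nat \<Rightarrow> nat \<Rightarrow> real" and lam :: real
  assumes finS: "finite S" and supp: "\<And>s. s \<in> S \<Longrightarrow> set_pmf (P s) \<subseteq> S"
    and dep: "\<And>i \<omega> \<omega>'. (\<And>j y. j < i \<Longrightarrow> \<omega> (j,y) = \<omega>' (j,y)) \<Longrightarrow> F i \<omega> = F i \<omega>'"
    and mean: "\<And>i \<omega> s'. s' \<in> S \<Longrightarrow> measure_pmf.expectation (P s') (F i \<omega> s') = 0"
    and bnd: "\<And>i \<omega> s' x. s' \<in> S \<Longrightarrow> x \<in> set_pmf (P s') \<Longrightarrow> \<bar>lam * F i \<omega> s' x\<bar> \<le> 1"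
    and var: "\<And>i \<omega> s'. s' \<in> S \<Longrightarrow> measure_pmf.expectation (P s') (\<lambda>x. (F i \<omega> s' x)\<^sup>2) \<le> vv i s'"
  shows "(\<integral>\<^sup>+\<omega>. ennreal (exp (lam * (\<Sum>i\<in>{t0<..t0+d}. \<Sum>s'\<in>S. F i \<omega> s' (\<omega> (i,s'))))) \<partial>samples S P (t0+d))
         \<le> ennreal (exp (lam\<^sup>2 * (\<Sum>i\<in>{t0<..t0+d}. \<Sum>s'\<in>S. vv i s')))"
proof (induction d)
  case 0 then show ?case by (simp add: measure_pmf.emeasure_space_1)
next
  case (Suc d)
  define m where "m = t0 + d"
  define R where "R = Pi_pmf ({Suc m} \<times> S) 0 (\<lambda>(t, s). P s)"
  define mg where "mg = (\<lambda>(f::nat\<times>nat\<Rightarrow>nat, g::nat\<times>nat\<Rightarrow>nat) x. if x \<in> {1..m} \<times> S then f x else g x)"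
  define M where "M = (\<lambda>\<omega>. \<Sum>i\<in>{t0<..m}. \<Sum>s'\<in>S. F i \<omega> s' (\<omega> (i,s')))"
  define C where "C = (\<Sum>s'\<in>S. vv (Suc m) s')"
  define G where "G = (\<lambda>f g. \<Sum>s'\<in>S. F (Suc m) f s' (g (Suc m, s')))"
  have split: "{t0<..Suc m} = insert (Suc m) {t0<..m}" by (auto simp: m_def)
  have key: "(\<Sum>i\<in>{t0<..Suc m}. \<Sum>s'\<in>S. F i (mg (f,g)) s' (mg (f,g) (i,s'))) = M f + G f g"
    if f: "f \<in> set_pmf (samples S P m)" and g: "g \<in> set_pmf R" for f g
  proof -
    have f0: "\<And>x. x \<notin> {1..m}\<times>S \<Longrightarrow> f x = 0" by (rule samples_supp[OF finS f])
    have "set_pmf R \<subseteq> {f. \<forall>x. x \<notin> {Suc m}\<times>S \<longrightarrow> f x = 0}"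
      unfolding R_def by (rule set_Pi_pmf_subset) (use finS in auto)
    then have g0: "\<And>x. x \<notin> {Suc m}\<times>S \<Longrightarrow> g x = 0" using g by blast
    have agree: "\<And>j y. j \<le> m \<Longrightarrow> mg (f,g) (j,y) = f (j,y)" using f0 g0 unfolding mg_def by auto
    have lastc: "\<And>y. mg (f,g) (Suc m, y) = g (Suc m, y)" unfolding mg_def by auto
    have Fi: "\<And>i. i \<le> Suc m \<Longrightarrow> F i (mg (f,g)) = F i f" by (rule dep) (use agree in auto)
    have "(\<Sum>i\<in>{t0<..Suc m}. \<Sum>s'\<in>S. F i (mg (f,g)) s' (mg (f,g) (i,s')))
       = (\<Sum>s'\<in>S. F (Suc m) (mg (f,g)) s' (mg (f,g) (Suc m,s'))) + (\<Sum>i\<in>{t0<..m}. \<Sum>s'\<in>S. F i (mg (f,g)) s' (mg (f,g) (i,s')))"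
      unfolding split by (subst sum.insert) auto
    also have "(\<Sum>s'\<in>S. F (Suc m) (mg (f,g)) s' (mg (f,g) (Suc m,s'))) = G f g"
      unfolding G_def using Fi[of "Suc m"] lastc by simp
    also have "(\<Sum>i\<in>{t0<..m}. \<Sum>s'\<in>S. F i (mg (f,g)) s' (mg (f,g) (i,s'))) = M f"
      unfolding M_def by (intro sum.cong refl) (use Fi agree in auto)
    finally show ?thesis by simp
  qed
  have "(\<integral>\<^sup>+\<omega>. ennreal (exp (lam * (\<Sum>i\<in>{t0<..Suc m}. \<Sum>s'\<in>S. F i \<omega> s' (\<omega> (i,s'))))) \<partial>samples S P (Suc m))
     = (\<integral>\<^sup>+f. \<integral>\<^sup>+g. ennreal (exp (lam * (\<Sum>i\<in>{t0<..Suc m}. \<Sum>s'\<in>S. F i (mg (f,g)) s' (mg (f,g) (i,s'))))) \<partial>R \<partial>samples S P m)"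
    unfolding samples_split[OF finS] nn_integral_map_pmf nn_integral_pair_pmf' mg_def R_def by simp
  also have "\<dots> = (\<integral>\<^sup>+f. \<integral>\<^sup>+g. ennreal (exp (lam * M f)) * ennreal (exp (lam * G f g)) \<partial>R \<partial>samples S P m)"
  proof (rule nn_integral_cong_AE, rule AE_pmfI)
    fix f assume f: "f \<in> set_pmf (samples S P m)"
    show "(\<integral>\<^sup>+g. ennreal (exp (lam * (\<Sum>i\<in>{t0<..Suc m}. \<Sum>s'\<in>S. F i (mg (f,g)) s' (mg (f,g) (i,s'))))) \<partial>R)
        = (\<integral>\<^sup>+g. ennreal (exp (lam * M f)) * ennreal (exp (lam * G f g)) \<partial>R)"
    proof (rule nn_integral_cong_AE, rule AE_pmfI)
      fix g assume g: "g \<in> set_pmf R"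
      show "ennreal (exp (lam * (\<Sum>i\<in>{t0<..Suc m}. \<Sum>s'\<in>S. F i (mg (f,g)) s' (mg (f,g) (i,s')))))
          = ennreal (exp (lam * M f)) * ennreal (exp (lam * G f g))"
        unfolding key[OF f g] by (simp add: distrib_left exp_add ennreal_mult')
    qed
  qed
  also have "\<dots> = (\<integral>\<^sup>+f. ennreal (exp (lam * M f)) * (\<integral>\<^sup>+g. ennreal (exp (lam * G f g)) \<partial>R) \<partial>samples S P m)"
    by (simp add: nn_integral_cmult)
  also have "\<dots> \<le> (\<integral>\<^sup>+f. ennreal (exp (lam * M f)) * ennreal (exp (lam\<^sup>2 * C)) \<partial>samples S P m)"
  proof (intro nn_integral_mono mult_left_mono)
    fix f
    show "(\<integral>\<^sup>+g. ennreal (exp (lam * G f g)) \<partial>R) \<le> ennreal (exp (lam\<^sup>2 * C))"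
      unfolding G_def R_def C_def
      by (rule inner_mgf[OF finS supp]) (auto intro: mean bnd var)
  qed simp
  also have "\<dots> = (\<integral>\<^sup>+f. ennreal (exp (lam * M f)) \<partial>samples S P m) * ennreal (exp (lam\<^sup>2 * C))"
    by (simp add: nn_integral_multc)
  also have "\<dots> \<le> ennreal (exp (lam\<^sup>2 * (\<Sum>i\<in>{t0<..m}. \<Sum>s'\<in>S. vv i s'))) * ennreal (exp (lam\<^sup>2 * C))"
    using Suc.IH unfolding M_def m_def by (intro mult_right_mono) auto
  also have "\<dots> = ennreal (exp (lam\<^sup>2 * (\<Sum>i\<in>{t0<..Suc m}. \<Sum>s'\<in>S. vv i s')))"
    unfolding split C_def by (subst sum.insert) (auto simp: distrib_left exp_add ennreal_mult' mult.commute)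
  finally show ?case unfolding m_def by simp
qed

lemma marginal:
  fixes G :: "(nat \<times> nat \<Rightarrow> nat) \<Rightarrow> ennreal"
  assumes finS: "finite S" and mn: "m \<le> n"
    and dep: "\<And>\<omega> \<omega>'. (\<And>j y. j \<le> m \<Longrightarrow> \<omega> (j,y) = \<omega>' (j,y)) \<Longrightarrow> G \<omega> = G \<omega>'"
  shows "(\<integral>\<^sup>+\<omega>. G \<omega> \<partial>samples S P n) = (\<integral>\<^sup>+\<omega>. G \<omega> \<partial>samples S P m)"
proof -
  have "samples S P m = map_pmf (\<lambda>f x. if x \<in> {1..m} \<times> S then f x else 0) (samples S P n)"
    unfolding samples_def by (rule Pi_pmf_subset) (use finS mn in auto)
  then have "(\<integral>\<^sup>+\<omega>. G \<omega> \<partial>samples S P m) = (\<integral>\<^sup>+\<omega>. G (\<lambda>x. if x \<in> {1..m} \<times> S then \<omega> x else 0) \<partial>samples S P n)"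
    by simp
  also have "\<dots> = (\<integral>\<^sup>+\<omega>. G \<omega> \<partial>samples S P n)"
  proof (rule nn_integral_cong_AE, rule AE_pmfI)
    fix \<omega> assume w: "\<omega> \<in> set_pmf (samples S P n)"
    have z: "\<And>x. x \<notin> {1..n} \<times> S \<Longrightarrow> \<omega> x = 0" by (rule samples_supp[OF finS w])
    show "G (\<lambda>x. if x \<in> {1..m} \<times> S then \<omega> x else 0) = G \<omega>"
    proof (rule dep)
      fix j y assume j: "j \<le> m"
      show "(if (j, y) \<in> {1..m} \<times> S then \<omega> (j, y) else 0) = \<omega> (j, y)"
        using z[of "(j,y)"] j mn by auto
    qed
  qed
  finally show ?thesis by simp
qed

lemma markov_exp:
  fixes Q :: "'a pmf" and Z :: "'a \<Rightarrow> real"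
  assumes lam: "0 \<le> lam" and mom: "(\<integral>\<^sup>+\<omega>. ennreal (exp (lam * Z \<omega>)) \<partial>Q) \<le> ennreal (exp (lam\<^sup>2 * v))"
  shows "measure_pmf.prob Q {\<omega>. a \<le> Z \<omega>} \<le> exp (lam\<^sup>2 * v - lam * a)"
proof -
  have "emeasure (measure_pmf Q) {\<omega>. a \<le> Z \<omega>} = (\<integral>\<^sup>+\<omega>. indicator {\<omega>. a \<le> Z \<omega>} \<omega> \<partial>Q)"
    by simp
  also have "\<dots> \<le> (\<integral>\<^sup>+\<omega>. ennreal (exp (- lam * a)) * ennreal (exp (lam * Z \<omega>)) \<partial>Q)"
  proof (rule nn_integral_mono)
    fix \<omega>
    show "indicator {\<omega>. a \<le> Z \<omega>} \<omega> \<le> ennreal (exp (- lam * a)) * ennreal (exp (lam * Z \<omega>))"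
    proof (cases "a \<le> Z \<omega>")
      case True
      then have "0 \<le> lam * (Z \<omega> - a)" using lam by simp
      then have "1 \<le> exp (- lam * a) * exp (lam * Z \<omega>)" by (simp add: exp_add[symmetric] algebra_simps)
      then show ?thesis using True by (simp add: ennreal_mult'[symmetric])
    qed simp
  qed
  also have "\<dots> = ennreal (exp (- lam * a)) * (\<integral>\<^sup>+\<omega>. ennreal (exp (lam * Z \<omega>)) \<partial>Q)"
    by (simp add: nn_integral_cmult)
  also have "\<dots> \<le> ennreal (exp (- lam * a)) * ennreal (exp (lam\<^sup>2 * v))"
    using mom by (intro mult_left_mono) auto
  also have "\<dots> = ennreal (exp (lam\<^sup>2 * v - lam * a))"
    by (simp add: ennreal_mult'[symmetric] exp_add[symmetric])
  finally show ?thesis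
    by (simp add: measure_pmf.emeasure_eq_measure)
qed

lemma tail_bound:
  fixes Q :: "'a pmf" and Z :: "'a \<Rightarrow> real"
  assumes lm: "0 < lm" and v: "0 \<le> v" and L: "0 \<le> L"
    and mom: "\<And>lam. 0 \<le> lam \<Longrightarrow> lam \<le> lm \<Longrightarrow> (\<integral>\<^sup>+\<omega>. ennreal (exp (lam * Z \<omega>)) \<partial>Q) \<le> ennreal (exp (lam\<^sup>2 * v))"
  shows "measure_pmf.prob Q {\<omega>. 2 * sqrt (L * v) + 2 * L / lm \<le> Z \<omega>} \<le> exp (- L)"
proof -
  define a where "a = 2 * sqrt (L * v) + 2 * L / lm"
  have a1: "2 * sqrt (L * v) \<le> a" "2 * L / lm \<le> a" unfolding a_def using L lm v by auto
  show ?thesis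
  proof (cases "v > 0 \<and> sqrt (L / v) \<le> lm")
    case True
    define lam where "lam = sqrt (L / v)"
    have l0: "0 \<le> lam" unfolding lam_def using L True by simp
    have P1: "measure_pmf.prob Q {\<omega>. a \<le> Z \<omega>} \<le> exp (lam\<^sup>2 * v - lam * a)"
      by (rule markov_exp[OF l0 mom[OF l0]]) (use True lam_def in auto)
    have P2: "lam\<^sup>2 * v = L" unfolding lam_def using True L by simp
    have P3: "lam * a \<ge> 2 * L"
    proof -
      have "lam * a \<ge> lam * (2 * sqrt (L * v))" using a1 l0 by (intro mult_left_mono) auto
      also have "lam * (2 * sqrt (L * v)) = 2 * (sqrt (L / v) * sqrt (L * v))" unfolding lam_def
        by simp
      also have "sqrt (L / v) * sqrt (L * v) = sqrt (L / v * (L * v))" by (simp only: real_sqrt_mult)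
      also have "L / v * (L * v) = L\<^sup>2" using True by (simp add: power2_eq_square field_simps)
      finally show ?thesis using L by simp
    qed
    have "exp (lam\<^sup>2 * v - lam * a) \<le> exp (- L)" using P2 P3 by simp
    with P1 have "measure_pmf.prob Q {\<omega>. a \<le> Z \<omega>} \<le> exp (- L)" by linarith
    then show ?thesis unfolding a_def .
  next
    case False
    have l0: "0 \<le> lm" using lm by simp
    have P1: "measure_pmf.prob Q {\<omega>. a \<le> Z \<omega>} \<le> exp (lm\<^sup>2 * v - lm * a)"
      by (rule markov_exp[OF l0 mom[OF l0]]) auto
    have P2: "lm\<^sup>2 * v \<le> L"
    proof (cases "v > 0")
      case True
      then have "lm < sqrt (L / v)" using False by auto
      then have "lm\<^sup>2 < (sqrt (L / v))\<^sup>2" using lm by (intro power_strict_mono) auto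
      then have "lm\<^sup>2 < L / v" using L True by simp
      then have "lm\<^sup>2 * v \<le> L" using True by (simp add: field_simps)
      then show ?thesis .
    next
      case False then have "v = 0" using v by simp
      then show ?thesis using L by simp
    qed
    have P3: "lm * a \<ge> 2 * L" using a1(2) lm by (simp add: field_simps)
    have "exp (lm\<^sup>2 * v - lm * a) \<le> exp (- L)" using P2 P3 by simp
    with P1 have "measure_pmf.prob Q {\<omega>. a \<le> Z \<omega>} \<le> exp (- L)" by linarith
    then show ?thesis unfolding a_def .
  qed
qed


context tdl begin

lemma td_dep: "(\<And>j y. 1 \<le> j \<Longrightarrow> j \<le> t \<Longrightarrow> \<omega> (j,y) = \<omega>' (j,y)) \<Longrightarrow> V \<omega> t = V \<omega>' t"
proof (induction t)
  case 0 then show ?case by (simp add: fun_eq_iff)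
next
  case (Suc t)
  have "V \<omega> t = V \<omega>' t" using Suc by auto
  moreover have "\<And>s. \<omega> (Suc t, s) = \<omega>' (Suc t, s)" using Suc.prems by auto
  ultimately show ?case by (simp add: fun_eq_iff)
qed

definition good :: "(nat \<times> nat \<Rightarrow> nat) \<Rightarrow> nat \<Rightarrow> real \<Rightarrow> bool" where
  "good \<omega> i B \<longleftrightarrow> valid \<omega> i \<and> (\<forall>x\<in>S. \<bar>err \<omega> i x\<bar> \<le> B)"

lemma good_dep: "(\<And>j y. 1 \<le> j \<Longrightarrow> j \<le> i \<Longrightarrow> \<omega> (j,y) = \<omega>' (j,y)) \<Longrightarrow> good \<omega> i B = good \<omega>' i B"
proof -
  assume a: "\<And>j y. 1 \<le> j \<Longrightarrow> j \<le> i \<Longrightarrow> \<omega> (j,y) = \<omega>' (j,y)"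
  have "V \<omega> i = V \<omega>' i" by (rule td_dep) (use a in auto)
  moreover have "valid \<omega> i = valid \<omega>' i" unfolding valid_def using a by auto
  ultimately show ?thesis unfolding good_def err_def by simp
qed

definition Zw :: "nat \<Rightarrow> nat \<Rightarrow> nat \<Rightarrow> real \<Rightarrow> (nat \<times> nat \<Rightarrow> nat) \<Rightarrow> real" where
  "Zw t \<tau> s B \<omega> = (\<Sum>i\<in>{t-\<tau><..t}. \<Sum>s'\<in>S. \<eta> i * \<gamma> * W i (t - i) s s' * (if good \<omega> (i-1) B then 1 else 0) * xi \<omega> i s')"

lemma varS_nonneg: "s \<in> S \<Longrightarrow> 0 \<le> varS s"
proof -
  assume s: "s \<in> S"
  have "0 \<le> PV (\<lambda>x. (Vs x - PV Vs s)\<^sup>2) s" using PV_mono[of "\<lambda>_. 0" "\<lambda>x. (Vs x - PV Vs s)\<^sup>2" s] PV_const[OF s] by simp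
  then show ?thesis unfolding varS_def PV_var[OF s] .
qed

lemma sum_eta_W1: "s \<in> S \<Longrightarrow> t0 + n \<le> T \<Longrightarrow> (\<Sum>i\<in>{t0<..t0+n}. \<eta> i * Wapp i (t0 + n - i) (\<lambda>x. 1) s) \<le> 1 / (1-\<gamma>)"
proof -
  assume s: "s \<in> S" and T: "t0 + n \<le> T"
  define h where "h = 1 - \<gamma>"
  have hp: "0 < h" using gam1 h_def by simp
  have "(\<Sum>i\<in>{t0<..t0+n}. \<eta> i * Wapp i (t0 + n - i) (\<lambda>x. 1) s)
      = (\<Sum>i\<in>{t0<..t0+n}. \<eta> i * Wapp i (t0 + n - i) (\<lambda>x. (\<lambda>_. 1/h) x - \<gamma> * PV (\<lambda>_. 1/h) x) s)"
  proof (intro sum.cong refl arg_cong2[where f="(*)"] Wapp_cong)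
    fix x assume x: "x \<in> S"
    show "1 = 1/h - \<gamma> * PV (\<lambda>_. 1/h) x" using PV_const[OF x] hp h_def by (simp add: field_simps)
  qed
  also have "\<dots> = 1/h - Wapp t0 n (\<lambda>_. 1/h) s" by (rule telescope[OF s])
  also have "Wapp t0 n (\<lambda>_. 1/h) s = Rs t0 n * (1/h)" by (rule Wapp_const[OF s])
  finally show ?thesis using Rs_bounds[OF T] hp h_def by simp
qed

lemma window_tail:
  assumes s: "s \<in> S" and tT: "t \<le> T" and \<tau>t: "\<tau> \<le> t" and sg: "\<sigma> = 1 \<or> \<sigma> = -1"
    and eh: "0 < eh" and ehb: "\<And>i. t - \<tau> < i \<Longrightarrow> i \<le> t \<Longrightarrow> \<eta> i \<le> eh" and B: "0 \<le> B" and L: "0 \<le> L"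
  shows "measure_pmf.prob (samples S P T) {\<omega>. 2 * sqrt (L * (eh * (6/(1-\<gamma>)\<^sup>2 + 2*B\<^sup>2/(1-\<gamma>)))) + 2 * L / ((1-\<gamma>)/eh)
            \<le> \<sigma> * Zw t \<tau> s B \<omega>} \<le> exp (-L)"
proof -
  define h where "h = 1 - \<gamma>"
  have hp: "0 < h" using gam1 h_def by simp
  define t0 where "t0 = t - \<tau>"
  have tt: "t0 + \<tau> = t" using \<tau>t t0_def by simp
  define cf where "cf = (\<lambda>i s'. if i \<in> {t0<..t} then \<eta> i * \<gamma> * W i (t - i) s s' else 0)"
  define F where "F = (\<lambda>i \<omega> s' y. \<sigma> * cf i s' * (if good \<omega> (i-1) B then 1 else 0) * (V \<omega> (i-1) y - PV (V \<omega> (i-1)) s'))"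
  define vv where "vv = (\<lambda>i s'. (cf i s')\<^sup>2 * (2 * varS s' + 2 * B\<^sup>2))"
  define vb where "vb = eh * (6/h\<^sup>2 + 2*B\<^sup>2/h)"
  have sgabs: "\<bar>\<sigma>\<bar> = 1" using sg by auto
  have cfb: "0 \<le> cf i s' \<and> cf i s' \<le> \<eta> i \<and> \<eta> i \<le> eh" if i: "i \<in> {t0<..t}" and s': "s' \<in> S" for i s'
  proof -
    have e: "0 < \<eta> i" "\<eta> i \<le> 1" using eta01[of i] i tT by auto
    have w: "0 \<le> W i (t - i) s s'" "W i (t - i) s s' \<le> 1"
      using W_nonneg[of i "t - i"] W_le1[OF s s', of i "t - i"] i tT by auto
    have "\<gamma> * W i (t - i) s s' \<le> 1 * 1" using w gam0 gam1 by (intro mult_mono) auto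
    then have "\<eta> i * (\<gamma> * W i (t - i) s s') \<le> \<eta> i * 1" using e by (intro mult_left_mono) auto
    moreover have "0 \<le> \<eta> i * \<gamma> * W i (t - i) s s'" using e w gam0 by simp
    moreover have "\<eta> i \<le> eh" using ehb i t0_def by auto
    moreover have "cf i s' = \<eta> i * \<gamma> * W i (t - i) s s'" using that(1) unfolding cf_def by (simp only: if_True)
    ultimately show ?thesis by (simp add: mult.assoc)
  qed
  have cf0: "i \<notin> {t0<..t} \<Longrightarrow> cf i s' = 0" for i s' unfolding cf_def by auto
  have Vb: "\<bar>V \<omega> (i-1) y - PV (V \<omega> (i-1)) s'\<bar> \<le> 1/h"
    if "good \<omega> (i-1) B" "i \<in> {t0<..t}" "s' \<in> S" "y \<in> S" for \<omega> i s' y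
  proof -
    have vld: "valid \<omega> (i-1)" using that unfolding good_def by simp
    have it: "i - 1 \<le> T" using that tT by auto
    have a: "0 \<le> V \<omega> (i-1) y \<and> V \<omega> (i-1) y \<le> 1/h" using V_bounds[OF vld it that(4)] h_def by simp
    have b: "0 \<le> PV (V \<omega> (i-1)) s' \<and> PV (V \<omega> (i-1)) s' \<le> 1/h"
      by (rule PV_bounds[OF that(3)]) (use V_bounds[OF vld it] h_def in auto)
    show ?thesis using a b by (simp add: abs_le_iff)
  qed
  have mom: "(\<integral>\<^sup>+\<omega>. ennreal (exp (lam * (\<sigma> * Zw t \<tau> s B \<omega>))) \<partial>samples S P T) \<le> ennreal (exp (lam\<^sup>2 * vb))"
    if l0: "0 \<le> lam" and l1: "lam \<le> h / eh" for lam
  proof -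
    have sumF: "(\<Sum>i\<in>{t0<..t0+\<tau>}. \<Sum>s'\<in>S. F i \<omega> s' (\<omega> (i,s'))) = \<sigma> * Zw t \<tau> s B \<omega>" for \<omega>
    proof -
      have "\<sigma> * Zw t \<tau> s B \<omega> = (\<Sum>i\<in>{t0<..t}. \<Sum>s'\<in>S. \<sigma> * (\<eta> i * \<gamma> * W i (t - i) s s' * (if good \<omega> (i-1) B then 1 else 0) * xi \<omega> i s'))"
        unfolding Zw_def t0_def by (simp add: sum_distrib_left)
      also have "\<dots> = (\<Sum>i\<in>{t0<..t}. \<Sum>s'\<in>S. F i \<omega> s' (\<omega> (i,s')))"
      proof (intro sum.cong refl)
        fix i s' assume i: "i \<in> {t0<..t}"
        have "cf i s' = \<eta> i * \<gamma> * W i (t - i) s s'" using i unfolding cf_def by (simp only: if_True)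
        then show "\<sigma> * (\<eta> i * \<gamma> * W i (t - i) s s' * (if good \<omega> (i-1) B then 1 else 0) * xi \<omega> i s') = F i \<omega> s' (\<omega> (i,s'))"
          unfolding F_def xi_def by (simp only: mult.assoc)
      qed
      finally show ?thesis unfolding tt by simp
    qed
    have m1: "(\<integral>\<^sup>+\<omega>. ennreal (exp (lam * (\<Sum>i\<in>{t0<..t0+\<tau>}. \<Sum>s'\<in>S. F i \<omega> s' (\<omega> (i,s'))))) \<partial>samples S P (t0+\<tau>))
         \<le> ennreal (exp (lam\<^sup>2 * (\<Sum>i\<in>{t0<..t0+\<tau>}. \<Sum>s'\<in>S. vv i s')))"
    proof (rule moment[OF finS supp])
      fix i and \<omega> \<omega>' :: "nat \<times> nat \<Rightarrow> nat"
      assume a: "\<And>j y. j < i \<Longrightarrow> \<omega> (j,y) = \<omega>' (j,y)"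
      have "good \<omega> (i-1) B = good \<omega>' (i-1) B" by (rule good_dep) (use a in auto)
      moreover have "V \<omega> (i-1) = V \<omega>' (i-1)" by (rule td_dep) (use a in auto)
      ultimately show "F i \<omega> = F i \<omega>'" unfolding F_def by simp
    next
      fix i \<omega> s' assume s': "s' \<in> S"
      define c where "c = \<sigma> * cf i s' * (if good \<omega> (i-1) B then 1 else 0)"
      have "measure_pmf.expectation (P s') (F i \<omega> s') = PV (\<lambda>y. c * (V \<omega> (i-1) y - PV (V \<omega> (i-1)) s')) s'"
        unfolding F_def c_def by (subst PV_exp[OF s']) (simp add: mult.assoc)
      also have "\<dots> = c * (PV (V \<omega> (i-1)) s' - PV (V \<omega> (i-1)) s')"
        by (simp only: PV_cmult PV_diff PV_const[OF s'])
      finally show "measure_pmf.expectation (P s') (F i \<omega> s') = 0" by simp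
    next
      fix i \<omega> s' x assume s': "s' \<in> S" and x: "x \<in> set_pmf (P s')"
      have xS: "x \<in> S" using supp[OF s'] x by auto
      show "\<bar>lam * F i \<omega> s' x\<bar> \<le> 1"
      proof (cases "good \<omega> (i-1) B \<and> i \<in> {t0<..t}")
        case True
        have iw: "i \<in> {t0<..t}" and gd: "good \<omega> (i-1) B" using True by auto
        have c: "0 \<le> cf i s'" "cf i s' \<le> eh" using cfb[OF iw s'] by auto
        have v: "\<bar>V \<omega> (i-1) x - PV (V \<omega> (i-1)) s'\<bar> \<le> 1/h" by (rule Vb[OF gd iw s' xS])
        have "\<bar>lam * F i \<omega> s' x\<bar> = \<bar>lam\<bar> * \<bar>\<sigma>\<bar> * \<bar>cf i s'\<bar> * \<bar>V \<omega> (i-1) x - PV (V \<omega> (i-1)) s'\<bar>"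
          unfolding F_def using gd by (simp only: abs_mult if_True mult_1_right)
        also have "\<dots> = lam * cf i s' * \<bar>V \<omega> (i-1) x - PV (V \<omega> (i-1)) s'\<bar>"
          using l0 c sgabs by simp
        also have "\<dots> \<le> (h / eh) * eh * (1/h)"
        proof (rule mult_mono)
          show "lam * cf i s' \<le> h / eh * eh" by (rule mult_mono) (use l1 c l0 eh hp in auto)
        qed (use v l0 c hp eh in auto)
        also have "\<dots> = 1" using hp eh by simp
        finally show ?thesis .
      next
        case False
        then show ?thesis unfolding F_def using cf0 by auto
      qed
    next
      fix i \<omega> s' assume s': "s' \<in> S"
      show "measure_pmf.expectation (P s') (\<lambda>x. (F i \<omega> s' x)\<^sup>2) \<le> vv i s'"
      proof (cases "good \<omega> (i-1) B")
        case True
        have "measure_pmf.expectation (P s') (\<lambda>x. (F i \<omega> s' x)\<^sup>2)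
           = PV (\<lambda>x. (cf i s')\<^sup>2 * (V \<omega> (i-1) x - PV (V \<omega> (i-1)) s')\<^sup>2) s'"
          unfolding F_def PV_exp[OF s'] using True sg
          by (intro PV_cong) (auto simp add: power_mult_distrib)
        also have "\<dots> = (cf i s')\<^sup>2 * PV (\<lambda>x. (V \<omega> (i-1) x - PV (V \<omega> (i-1)) s')\<^sup>2) s'"
          by (rule PV_cmult)
        also have "\<dots> \<le> (cf i s')\<^sup>2 * (2 * varS s' + 2 * B\<^sup>2)"
        proof (intro mult_left_mono xi_var[OF s'])
          fix x assume "x \<in> S"
          then show "\<bar>V \<omega> (i - 1) x - Vs x\<bar> \<le> B" using True unfolding good_def err_def by auto
        qed simp
        finally show ?thesis unfolding vv_def .
      next
        case False
        have "0 \<le> vv i s'" unfolding vv_def using varS_nonneg[OF s'] B by simp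
        then show ?thesis unfolding F_def using False by simp
      qed
    qed
    have vsum: "(\<Sum>i\<in>{t0<..t0+\<tau>}. \<Sum>s'\<in>S. vv i s') \<le> vb"
    proof -
      have "(\<Sum>i\<in>{t0<..t0+\<tau>}. \<Sum>s'\<in>S. vv i s') \<le>
            (\<Sum>i\<in>{t0<..t0+\<tau>}. eh * (2 * (\<eta> i * Wapp i (t0 + \<tau> - i) (\<lambda>x. \<gamma>\<^sup>2 * varS x) s)
                                    + 2 * B\<^sup>2 * (\<eta> i * Wapp i (t0 + \<tau> - i) (\<lambda>x. 1) s)))"
      proof (intro sum_mono)
        fix i assume i: "i \<in> {t0<..t0+\<tau>}"
        have iw: "i \<in> {t0<..t}" using i tt by simp
        have "(\<Sum>s'\<in>S. vv i s') \<le> (\<Sum>s'\<in>S. eh * (2 * (\<eta> i * (W i (t0 + \<tau> - i) s s' * (\<gamma>\<^sup>2 * varS s')))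
                                    + 2 * B\<^sup>2 * (\<eta> i * (W i (t0 + \<tau> - i) s s' * 1))))"
        proof (intro sum_mono)
          fix s' assume s': "s' \<in> S"
          have c: "0 \<le> cf i s'" "cf i s' \<le> \<eta> i" "\<eta> i \<le> eh" using cfb[OF iw s'] by auto
          have w: "0 \<le> W i (t - i) s s'" "W i (t - i) s s' \<le> 1"
            using W_nonneg[of i "t - i"] W_le1[OF s s', of i "t - i"] iw tT by auto
          have e: "0 < \<eta> i" using eta01[of i] iw tT by auto
          have cfe: "cf i s' = \<eta> i * \<gamma> * W i (t - i) s s'" using iw unfolding cf_def by simp
          have "(cf i s')\<^sup>2 = \<eta> i * \<eta> i * \<gamma>\<^sup>2 * (W i (t - i) s s' * W i (t - i) s s')"
            unfolding cfe by (simp add: power2_eq_square algebra_simps)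
          also have "\<dots> \<le> eh * \<eta> i * \<gamma>\<^sup>2 * (W i (t - i) s s' * 1)"
            using c e w by (intro mult_mono mult_right_mono) auto
          finally have c2: "(cf i s')\<^sup>2 \<le> eh * \<eta> i * \<gamma>\<^sup>2 * W i (t - i) s s'" by simp
          have g2: "\<gamma>\<^sup>2 \<le> 1" using gam0 gam1 by (simp add: power_le_one)
          have vs: "0 \<le> varS s'" by (rule varS_nonneg[OF s'])
          have "vv i s' \<le> eh * \<eta> i * \<gamma>\<^sup>2 * W i (t - i) s s' * (2 * varS s' + 2 * B\<^sup>2)"
            unfolding vv_def using c2 vs B by (intro mult_right_mono) auto
          also have "\<dots> \<le> eh * (2 * (\<eta> i * (W i (t - i) s s' * (\<gamma>\<^sup>2 * varS s')))
                                    + 2 * B\<^sup>2 * (\<eta> i * (W i (t - i) s s' * 1)))"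
          proof -
            have "eh * \<eta> i * W i (t - i) s s' * (\<gamma>\<^sup>2 * B\<^sup>2) \<le> eh * \<eta> i * W i (t - i) s s' * (1 * B\<^sup>2)"
              using g2 eh e w by (intro mult_left_mono mult_right_mono) auto
            then show ?thesis by (simp add: algebra_simps)
          qed
          finally show "vv i s' \<le> eh * (2 * (\<eta> i * (W i (t0 + \<tau> - i) s s' * (\<gamma>\<^sup>2 * varS s')))
                                    + 2 * B\<^sup>2 * (\<eta> i * (W i (t0 + \<tau> - i) s s' * 1)))" using tt by simp
        qed
        also have "\<dots> = eh * (2 * (\<eta> i * Wapp i (t0 + \<tau> - i) (\<lambda>x. \<gamma>\<^sup>2 * varS x) s)
                                    + 2 * B\<^sup>2 * (\<eta> i * Wapp i (t0 + \<tau> - i) (\<lambda>x. 1) s))"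
          unfolding Wapp_def by (simp add: sum.distrib sum_distrib_left algebra_simps)
        finally show "(\<Sum>s'\<in>S. vv i s') \<le> eh * (2 * (\<eta> i * Wapp i (t0 + \<tau> - i) (\<lambda>x. \<gamma>\<^sup>2 * varS x) s)
                                    + 2 * B\<^sup>2 * (\<eta> i * Wapp i (t0 + \<tau> - i) (\<lambda>x. 1) s))" .
      qed
      also have "\<dots> = eh * (2 * (\<Sum>i\<in>{t0<..t0+\<tau>}. \<eta> i * Wapp i (t0 + \<tau> - i) (\<lambda>x. \<gamma>\<^sup>2 * varS x) s)
                      + 2 * B\<^sup>2 * (\<Sum>i\<in>{t0<..t0+\<tau>}. \<eta> i * Wapp i (t0 + \<tau> - i) (\<lambda>x. 1) s))"
        by (simp only: sum_distrib_left[symmetric] sum_lin2)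
      also have "\<dots> \<le> eh * (2 * (3 / h\<^sup>2) + 2 * B\<^sup>2 * (1 / h))"
        using tv_bound[OF s, of t0 \<tau>] sum_eta_W1[OF s, of t0 \<tau>] tt tT eh B h_def
        by (intro mult_left_mono add_mono mult_left_mono) auto
      also have "\<dots> = vb" unfolding vb_def by (simp add: algebra_simps)
      finally show ?thesis .
    qed
    have "(\<integral>\<^sup>+\<omega>. ennreal (exp (lam * (\<sigma> * Zw t \<tau> s B \<omega>))) \<partial>samples S P T)
        = (\<integral>\<^sup>+\<omega>. ennreal (exp (lam * (\<Sum>i\<in>{t0<..t0+\<tau>}. \<Sum>s'\<in>S. F i \<omega> s' (\<omega> (i,s'))))) \<partial>samples S P T)"
      unfolding sumF ..
    also have "\<dots> = (\<integral>\<^sup>+\<omega>. ennreal (exp (lam * (\<Sum>i\<in>{t0<..t0+\<tau>}. \<Sum>s'\<in>S. F i \<omega> s' (\<omega> (i,s'))))) \<partial>samples S P (t0+\<tau>))"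
    proof (rule marginal[OF finS])
      show "t0 + \<tau> \<le> T" using tt tT by simp
      fix \<omega> \<omega>' :: "nat \<times> nat \<Rightarrow> nat"
      assume a: "\<And>j y. j \<le> t0 + \<tau> \<Longrightarrow> \<omega> (j,y) = \<omega>' (j,y)"
      have "F i \<omega> = F i \<omega>'" if "i \<in> {t0<..t0+\<tau>}" for i
      proof -
        have "good \<omega> (i-1) B = good \<omega>' (i-1) B" by (rule good_dep) (use a that in auto)
        moreover have "V \<omega> (i-1) = V \<omega>' (i-1)" by (rule td_dep) (use a that in auto)
        ultimately show "F i \<omega> = F i \<omega>'" unfolding F_def by simp
      qed
      moreover have "\<omega> (i,s') = \<omega>' (i,s')" if "i \<in> {t0<..t0+\<tau>}" for i s' using a that by auto
      ultimately have "(\<Sum>i\<in>{t0<..t0+\<tau>}. \<Sum>s'\<in>S. F i \<omega> s' (\<omega> (i,s'))) = (\<Sum>i\<in>{t0<..t0+\<tau>}. \<Sum>s'\<in>S. F i \<omega>' s' (\<omega>' (i,s')))"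
        by (intro sum.cong refl) simp
      then show "ennreal (exp (lam * (\<Sum>i\<in>{t0<..t0+\<tau>}. \<Sum>s'\<in>S. F i \<omega> s' (\<omega> (i,s')))))
          = ennreal (exp (lam * (\<Sum>i\<in>{t0<..t0+\<tau>}. \<Sum>s'\<in>S. F i \<omega>' s' (\<omega>' (i,s')))))"
        by simp
    qed
    also have "\<dots> \<le> ennreal (exp (lam\<^sup>2 * (\<Sum>i\<in>{t0<..t0+\<tau>}. \<Sum>s'\<in>S. vv i s')))" by (rule m1)
    also have "\<dots> \<le> ennreal (exp (lam\<^sup>2 * vb))"
      using vsum by (intro ennreal_leI) (simp add: mult_left_mono)
    finally show ?thesis .
  qed
  have vb0: "0 \<le> vb" unfolding vb_def using eh hp B by simp
  have "measure_pmf.prob (samples S P T) {\<omega>. 2 * sqrt (L * vb) + 2 * L / (h / eh) \<le> \<sigma> * Zw t \<tau> s B \<omega>} \<le> exp (- L)"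
    by (rule tail_bound[OF _ vb0 L mom]) (use hp eh in auto)
  then show ?thesis unfolding vb_def h_def .
qed

end

context tdl begin

lemma err_bound0: "valid \<omega> i \<Longrightarrow> i \<le> T \<Longrightarrow> x \<in> S \<Longrightarrow> \<bar>err \<omega> i x\<bar> \<le> 1/(1-\<gamma>)"
  using V_bounds[of \<omega> i x] Vs_bounds[of x] unfolding err_def by (simp add: abs_le_iff)

lemma samples_valid: "\<omega> \<in> set_pmf (samples S P T) \<Longrightarrow> valid \<omega> T"
proof -
  assume w: "\<omega> \<in> set_pmf (samples S P T)"
  have "set_pmf (samples S P T) \<subseteq> PiE_dflt ({1..T} \<times> S) 0 (set_pmf \<circ> (\<lambda>(t, s). P s))"
    unfolding samples_def by (rule set_Pi_pmf_subset') (use finS in auto)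
  then have "\<And>j y. j \<in> {1..T} \<Longrightarrow> y \<in> S \<Longrightarrow> \<omega> (j,y) \<in> set_pmf (P y)"
    using w unfolding PiE_dflt_def by fastforce
  then show ?thesis unfolding valid_def using supp by blast
qed

lemma valid_mono: "valid \<omega> t \<Longrightarrow> i \<le> t \<Longrightarrow> valid \<omega> i"
  unfolding valid_def by auto

lemma err_window:
  assumes s: "s \<in> S" and tT: "t \<le> T" and \<tau>t: "\<tau> \<le> t"
    and g: "\<And>i. t - \<tau> < i \<Longrightarrow> i \<le> t \<Longrightarrow> good \<omega> (i-1) B"
    and b0: "\<And>x. x \<in> S \<Longrightarrow> \<bar>err \<omega> (t - \<tau>) x\<bar> \<le> B'"
  shows "\<bar>err \<omega> t s\<bar> \<le> Rs (t - \<tau>) \<tau> * B' + \<bar>Zw t \<tau> s B \<omega>\<bar>"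
proof -
  define t0 where "t0 = t - \<tau>"
  have tt: "t0 + \<tau> = t" using \<tau>t t0_def by simp
  have "err \<omega> (t0 + \<tau>) s = Wapp t0 \<tau> (err \<omega> t0) s + (\<Sum>i\<in>{t0<..t0+\<tau>}. \<eta> i * \<gamma> * Wapp i (t0 + \<tau> - i) (xi \<omega> i) s)"
    by (rule err_decomp[OF s])
  also have "(\<Sum>i\<in>{t0<..t0+\<tau>}. \<eta> i * \<gamma> * Wapp i (t0 + \<tau> - i) (xi \<omega> i) s) = Zw t \<tau> s B \<omega>"
    unfolding Zw_def tt t0_def[symmetric] Wapp_def sum_distrib_left
  proof (intro sum.cong refl)
    fix i s' assume i: "i \<in> {t0<..t}"
    then have "good \<omega> (i-1) B" using g t0_def by auto
    then show "\<eta> i * \<gamma> * (W i (t - i) s s' * xi \<omega> i s') = \<eta> i * \<gamma> * W i (t - i) s s' * (if good \<omega> (i - 1) B then 1 else 0) * xi \<omega> i s'"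
      by simp
  qed
  finally have "err \<omega> t s = Wapp t0 \<tau> (err \<omega> t0) s + Zw t \<tau> s B \<omega>" using tt by simp
  moreover have "\<bar>Wapp t0 \<tau> (err \<omega> t0) s\<bar> \<le> Rs t0 \<tau> * B'"
    by (rule Wapp_abs[OF s]) (use tt tT b0 t0_def in auto)
  ultimately show ?thesis unfolding t0_def
    using abs_triangle_ineq[of "Wapp t0 \<tau> (err \<omega> t0) s" "Zw t \<tau> s B \<omega>"] unfolding t0_def by linarith
qed

lemma Rs_le_exp:
  assumes T: "t0 + n \<le> T" and lo: "0 \<le> lo" and lb: "\<And>j. j \<le> T \<Longrightarrow> lo \<le> \<eta> j"
  shows "Rs t0 n \<le> exp (- (lo * (1-\<gamma>) * n))"
proof -
  have "Rs t0 n \<le> (\<Prod>j\<in>{t0<..t0+n}. exp (- (lo * (1-\<gamma>))))"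
    unfolding Rs_def
  proof (rule prod_mono)
    fix j assume j: "j \<in> {t0<..t0+n}"
    have e: "lo \<le> \<eta> j" "\<eta> j \<le> 1" using lb[of j] eta01[of j] j T by auto
    have "\<eta> j * (1-\<gamma>) \<le> 1 * 1" using e gam0 gam1 by (intro mult_mono) auto
    moreover have "lo * (1-\<gamma>) \<le> \<eta> j * (1-\<gamma>)" using e gam1 by (intro mult_right_mono) auto
    moreover have "1 - lo * (1-\<gamma>) \<le> exp (- (lo * (1-\<gamma>)))"
      using exp_ge_add_one_self[of "- (lo * (1-\<gamma>))"] by simp
    ultimately show "0 \<le> 1 - \<eta> j * (1 - \<gamma>) \<and> 1 - \<eta> j * (1 - \<gamma>) \<le> exp (- (lo * (1 - \<gamma>)))" by simp
  qed
  also have "\<dots> = exp (- (lo * (1-\<gamma>))) ^ n" by simp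
  also have "\<dots> = exp (- (lo * (1-\<gamma>) * n))" by (simp add: exp_of_nat_mult[symmetric] mult.commute)
  finally show ?thesis .
qed

end

context tdl begin

definition aa :: "real \<Rightarrow> real \<Rightarrow> real \<Rightarrow> real" where
  "aa L eh B = 2 * sqrt (L * (eh * (6/(1-\<gamma>)\<^sup>2 + 2*B\<^sup>2/(1-\<gamma>)))) + 2 * L / ((1-\<gamma>)/eh)"

lemma aa_nonneg: "0 \<le> L \<Longrightarrow> 0 < eh \<Longrightarrow> 0 \<le> aa L eh B"
  unfolding aa_def using gam1 by (auto intro!: add_nonneg_nonneg mult_nonneg_nonneg divide_nonneg_nonneg)

lemma assemble:
  assumes tau: "2 * \<tau> \<le> T"
    and eh: "0 < eh" and ehb: "\<And>i. T - 2*\<tau> < i \<Longrightarrow> i \<le> T \<Longrightarrow> \<eta> i \<le> eh"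
    and Dc: "\<And>t0. t0 + \<tau> \<le> T \<Longrightarrow> Rs t0 \<tau> * (1/(1-\<gamma>)) \<le> Eb"
    and L: "0 \<le> L"
    and fin: "Eb + aa L eh (Eb + aa L eh (1/(1-\<gamma>))) \<le> \<epsilon>"
    and cnt: "(2 * real \<tau> + 4) * real (card S) * exp (-L) \<le> \<delta>"
  shows "measure_pmf.prob (samples S P T) {\<omega>. \<forall>s\<in>S. \<bar>V \<omega> T s - Vs s\<bar> \<le> \<epsilon>} \<ge> 1 - \<delta>"
proof -
  define h where "h = 1 - \<gamma>"
  have hp: "0 < h" using gam1 h_def by simp
  define B0 where "B0 = 1/h"
  define A1 where "A1 = aa L eh B0"
  define B1 where "B1 = Eb + A1"
  define A2 where "A2 = aa L eh B1"
  have Eb0: "0 \<le> Eb"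
  proof -
    have "0 \<le> Rs 0 \<tau> * (1/(1-\<gamma>))" using Rs_bounds[of 0 \<tau>] tau hp h_def by simp
    also have "\<dots> \<le> Eb" using Dc[of 0] tau by simp
    finally show ?thesis .
  qed
  have B00: "0 \<le> B0" using hp B0_def by simp
  have B10: "0 \<le> B1" unfolding B1_def A1_def using Eb0 aa_nonneg[OF L eh] by simp
  define sg :: "real set" where "sg = {1, -1}"
  define I1 where "I1 = {T-\<tau>..T} \<times> S \<times> sg"
  define E1 where "E1 = (\<lambda>(t, s, \<sigma>). {\<omega>. A1 \<le> \<sigma> * Zw t \<tau> s B0 \<omega>})"
  define I2 where "I2 = S \<times> sg"
  define E2 where "E2 = (\<lambda>(s, \<sigma>). {\<omega>. A2 \<le> \<sigma> * Zw T \<tau> s B1 \<omega>})"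
  define Bad where "Bad = (\<Union>x\<in>I1. E1 x) \<union> (\<Union>x\<in>I2. E2 x)"
  define Q where "Q = samples S P T"
  have finI1: "finite I1" unfolding I1_def sg_def using finS by simp
  have finI2: "finite I2" unfolding I2_def sg_def using finS by simp
  have cardsg: "card sg = 2" unfolding sg_def by simp
  have p1: "measure_pmf.prob Q (E1 x) \<le> exp (-L)" if x: "x \<in> I1" for x
  proof -
    obtain t s \<sigma> where xe: "x = (t, s, \<sigma>)" by (cases x) auto
    have ts: "t \<in> {T-\<tau>..T}" "s \<in> S" "\<sigma> = 1 \<or> \<sigma> = -1" using x xe unfolding I1_def sg_def by auto
    have "measure_pmf.prob Q {\<omega>. aa L eh B0 \<le> \<sigma> * Zw t \<tau> s B0 \<omega>} \<le> exp (-L)"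
      unfolding aa_def Q_def
    proof (rule window_tail[OF ts(2) _ _ ts(3) eh _ B00 L])
      show "t \<le> T" "\<tau> \<le> t" using ts(1) tau by auto
      fix i assume i: "t - \<tau> < i" "i \<le> t"
      have "T - 2 * \<tau> < i" "i \<le> T" using i ts(1) by auto
      then show "\<eta> i \<le> eh" by (rule ehb)
    qed
    then show ?thesis unfolding E1_def xe A1_def by simp
  qed
  have p2: "measure_pmf.prob Q (E2 x) \<le> exp (-L)" if x: "x \<in> I2" for x
  proof -
    obtain s \<sigma> where xe: "x = (s, \<sigma>)" by (cases x) auto
    have ts: "s \<in> S" "\<sigma> = 1 \<or> \<sigma> = -1" using x xe unfolding I2_def sg_def by auto
    have "measure_pmf.prob Q {\<omega>. aa L eh B1 \<le> \<sigma> * Zw T \<tau> s B1 \<omega>} \<le> exp (-L)"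
      unfolding aa_def Q_def
    proof (rule window_tail[OF ts(1) _ _ ts(2) eh _ B10 L])
      show "T \<le> T" "\<tau> \<le> T" using tau by auto
      fix i assume i: "T - \<tau> < i" "i \<le> T"
      have "T - 2 * \<tau> < i" "i \<le> T" using i by auto
      then show "\<eta> i \<le> eh" by (rule ehb)
    qed
    then show ?thesis unfolding E2_def xe A2_def by simp
  qed
  have "measure_pmf.prob Q Bad \<le> measure_pmf.prob Q (\<Union>x\<in>I1. E1 x) + measure_pmf.prob Q (\<Union>x\<in>I2. E2 x)"
    unfolding Bad_def by (rule measure_Un_le) auto
  also have "measure_pmf.prob Q (\<Union>x\<in>I1. E1 x) \<le> (\<Sum>x\<in>I1. measure_pmf.prob Q (E1 x))"
    by (rule measure_pmf.finite_measure_subadditive_finite[OF finI1]) auto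
  also have "\<dots> \<le> (\<Sum>x\<in>I1. exp (-L))" by (rule sum_mono) (rule p1)
  also have "measure_pmf.prob Q (\<Union>x\<in>I2. E2 x) \<le> (\<Sum>x\<in>I2. measure_pmf.prob Q (E2 x))"
    by (rule measure_pmf.finite_measure_subadditive_finite[OF finI2]) auto
  also have "\<dots> \<le> (\<Sum>x\<in>I2. exp (-L))" by (rule sum_mono) (rule p2)
  also have "(\<Sum>x\<in>I1. exp (-L)) + (\<Sum>x\<in>I2. exp (-L)) = (2 * real \<tau> + 4) * real (card S) * exp (-L)"
  proof -
    have c1: "card I1 = (Suc \<tau>) * (card S * 2)" unfolding I1_def using tau by (simp add: card_cartesian_product cardsg)
    have c2: "card I2 = card S * 2" unfolding I2_def by (simp add: card_cartesian_product cardsg)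
    show ?thesis using c1 c2 by (simp add: algebra_simps)
  qed
  also have "\<dots> \<le> \<delta>" by (rule cnt)
  finally have pBad: "measure_pmf.prob Q Bad \<le> \<delta>" by simp
  have good_set: "\<forall>s\<in>S. \<bar>V \<omega> T s - Vs s\<bar> \<le> \<epsilon>" if w: "\<omega> \<in> set_pmf Q" and nb: "\<omega> \<notin> Bad" for \<omega>
  proof -
    have vT: "valid \<omega> T" using samples_valid w Q_def by simp
    have gen0: "good \<omega> j B0" if "j \<le> T" for j
      unfolding good_def using valid_mono[OF vT that] err_bound0[OF valid_mono[OF vT that] that] B0_def h_def by auto
    have ph1: "\<bar>err \<omega> t x\<bar> \<le> B1" if t: "t \<in> {T-\<tau>..T}" and x: "x \<in> S" for t x
    proof -
      have "\<bar>err \<omega> t x\<bar> \<le> Rs (t - \<tau>) \<tau> * B0 + \<bar>Zw t \<tau> x B0 \<omega>\<bar>"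
      proof (rule err_window[OF x])
        show "t \<le> T" "\<tau> \<le> t" using t tau by auto
        show "\<And>i. t - \<tau> < i \<Longrightarrow> i \<le> t \<Longrightarrow> good \<omega> (i - 1) B0" using gen0 t by auto
        show "\<And>x. x \<in> S \<Longrightarrow> \<bar>err \<omega> (t - \<tau>) x\<bar> \<le> B0"
          using err_bound0[OF valid_mono[OF vT]] t B0_def h_def by auto
      qed
      moreover have "Rs (t - \<tau>) \<tau> * B0 \<le> Eb" using Dc[of "t - \<tau>"] t tau B0_def h_def by auto
      moreover have "\<bar>Zw t \<tau> x B0 \<omega>\<bar> < A1"
      proof -
        have "(t, x, 1) \<in> I1" "(t, x, -1) \<in> I1" unfolding I1_def sg_def using t x by auto
        then have "\<omega> \<notin> E1 (t, x, 1)" "\<omega> \<notin> E1 (t, x, -1)" using nb unfolding Bad_def by auto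
        then show ?thesis unfolding E1_def by auto
      qed
      ultimately show ?thesis unfolding B1_def by linarith
    qed
    show ?thesis
    proof
      fix s assume s: "s \<in> S"
      have "\<bar>err \<omega> T s\<bar> \<le> Rs (T - \<tau>) \<tau> * B0 + \<bar>Zw T \<tau> s B1 \<omega>\<bar>"
      proof (rule err_window[OF s])
        show "T \<le> T" "\<tau> \<le> T" using tau by auto
        show "\<And>i. T - \<tau> < i \<Longrightarrow> i \<le> T \<Longrightarrow> good \<omega> (i - 1) B1"
        proof -
          fix i assume i: "T - \<tau> < i" "i \<le> T"
          have "i - 1 \<in> {T-\<tau>..T}" using i by auto
          then show "good \<omega> (i - 1) B1" unfolding good_def using ph1 valid_mono[OF vT, of "i-1"] i by auto
        qed
        show "\<And>x. x \<in> S \<Longrightarrow> \<bar>err \<omega> (T - \<tau>) x\<bar> \<le> B0"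
          using err_bound0[OF valid_mono[OF vT]] B0_def h_def by auto
      qed
      moreover have "Rs (T - \<tau>) \<tau> * B0 \<le> Eb" using Dc[of "T - \<tau>"] tau B0_def h_def by auto
      moreover have "\<bar>Zw T \<tau> s B1 \<omega>\<bar> < A2"
      proof -
        have "(s, 1) \<in> I2" "(s, -1) \<in> I2" unfolding I2_def sg_def using s by auto
        then have "\<omega> \<notin> E2 (s, 1)" "\<omega> \<notin> E2 (s, -1)" using nb unfolding Bad_def by auto
        then show ?thesis unfolding E2_def by auto
      qed
      moreover have "Eb + A2 \<le> \<epsilon>" using fin unfolding A2_def B1_def A1_def B0_def h_def by simp
      ultimately show "\<bar>V \<omega> T s - Vs s\<bar> \<le> \<epsilon>" unfolding err_def by linarith
    qed
  qed
  have c1: "measure_pmf.prob Q (UNIV - Bad) = 1 - measure_pmf.prob Q Bad"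
    using measure_pmf.prob_compl[of Bad Q] by simp
  have c2: "measure_pmf.prob Q (UNIV - Bad) = measure_pmf.prob Q ((UNIV - Bad) \<inter> set_pmf Q)"
    by (simp add: measure_Int_set_pmf)
  have c3: "measure_pmf.prob Q ((UNIV - Bad) \<inter> set_pmf Q) \<le> measure_pmf.prob Q {\<omega>. \<forall>s\<in>S. \<bar>V \<omega> T s - Vs s\<bar> \<le> \<epsilon>}"
    by (rule measure_pmf.finite_measure_mono) (use good_set in auto)
  from c1 c2 c3 pBad show ?thesis unfolding Q_def by linarith
qed

end

lemma aa_phase:
  fixes h \<epsilon> X B :: real
  assumes h: "0 < h" "h \<le> 1/2" and e: "0 < \<epsilon>" "\<epsilon> \<le> 1" and X: "0 \<le> X" "X \<le> h\<^sup>2 * \<epsilon>\<^sup>2 / 256" and B: "0 \<le> B"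
  shows "2 * sqrt (X * (6/h\<^sup>2 + 2*B\<^sup>2/h)) + 2 * X / h \<le> 2 * sqrt (\<epsilon>\<^sup>2 * ((6 + 2*h*B\<^sup>2) / 256)) + h * \<epsilon>\<^sup>2 / 128"
proof -
  have "X * (6/h\<^sup>2 + 2*B\<^sup>2/h) \<le> (h\<^sup>2 * \<epsilon>\<^sup>2 / 256) * (6/h\<^sup>2 + 2*B\<^sup>2/h)"
    by (rule mult_right_mono[OF X(2)]) (use h B in auto)
  also have "\<dots> = \<epsilon>\<^sup>2 * ((6 + 2*h*B\<^sup>2) / 256)" using h by (simp add: field_simps power2_eq_square)
  finally have 1: "sqrt (X * (6/h\<^sup>2 + 2*B\<^sup>2/h)) \<le> sqrt (\<epsilon>\<^sup>2 * ((6 + 2*h*B\<^sup>2) / 256))"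
    by (rule real_sqrt_le_mono)
  have "2 * X \<le> 2 * (h\<^sup>2 * \<epsilon>\<^sup>2 / 256)" using X(2) by linarith
  then have "2 * X / h \<le> 2 * (h\<^sup>2 * \<epsilon>\<^sup>2 / 256) / h" using h by (intro divide_right_mono) auto
  also have "\<dots> = h * \<epsilon>\<^sup>2 / 128" using h by (simp add: power2_eq_square field_simps)
  finally have 2: "2 * X / h \<le> h * \<epsilon>\<^sup>2 / 128" .
  from 1 2 show ?thesis by linarith
qed

lemma sq_sum_le': "(a + b)\<^sup>2 \<le> 2 * a\<^sup>2 + 2 * (b::real)\<^sup>2"
proof -
  have "0 \<le> (a - b)\<^sup>2" by simp
  then show ?thesis by (simp add: power2_eq_square algebra_simps)
qed

lemma sqrt_eps: "0 \<le> \<epsilon> \<Longrightarrow> 0 \<le> c \<Longrightarrow> sqrt (\<epsilon>\<^sup>2 * c) = \<epsilon> * sqrt c" for \<epsilon> c :: real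
  by (simp add: real_sqrt_mult)

lemma final_numeric:
  fixes h \<epsilon> X :: real
  assumes h: "0 < h" "h \<le> 1/2" and e: "0 < \<epsilon>" "\<epsilon> \<le> 1" and X: "0 \<le> X" "X \<le> h\<^sup>2 * \<epsilon>\<^sup>2 / 256"
  defines "aB \<equiv> (\<lambda>B. 2 * sqrt (X * (6/h\<^sup>2 + 2*B\<^sup>2/h)) + 2 * X / h)"
  shows "\<epsilon>/4 + aB (\<epsilon>/4 + aB (1/h)) \<le> \<epsilon>"
proof -
  define Q0 where "Q0 = (6 + 2/h)/256"
  have Q0: "0 \<le> Q0" "Q0 = (6 + 2/h)/256" unfolding Q0_def using h by auto
  have hh: "2*h*(1/h)\<^sup>2 = 2/h" using h by (simp add: power2_eq_square)
  have "aB (1/h) \<le> 2 * sqrt (\<epsilon>\<^sup>2 * Q0) + h * \<epsilon>\<^sup>2 / 128"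
    using aa_phase[OF h e X, of "1/h"] h unfolding aB_def Q0_def hh by simp
  then have a0: "aB (1/h) \<le> 2 * (\<epsilon> * sqrt Q0) + h * \<epsilon>\<^sup>2 / 128"
    using sqrt_eps[of \<epsilon> Q0] e Q0(1) by simp
  have a00: "0 \<le> aB (1/h)" unfolding aB_def using X h by simp
  define B1 where "B1 = \<epsilon>/4 + aB (1/h)"
  have B10: "0 \<le> B1" unfolding B1_def using a00 e by simp
  define p where "p = \<epsilon>/4 + h * \<epsilon>\<^sup>2 / 128"
  define q where "q = 2 * (\<epsilon> * sqrt Q0)"
  have B1pq: "B1 \<le> p + q" unfolding B1_def p_def q_def using a0 by simp
  have p0: "0 \<le> p" "p \<le> 1/2" unfolding p_def using h e
  proof -
    have "h * \<epsilon>\<^sup>2 \<le> 1 * 1" using h e by (intro mult_mono) (auto simp: power_le_one)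
    then show "0 \<le> \<epsilon> / 4 + h * \<epsilon>\<^sup>2 / 128" "\<epsilon> / 4 + h * \<epsilon>\<^sup>2 / 128 \<le> 1/2" using e h by auto
  qed
  have q2: "q\<^sup>2 = 4 * \<epsilon>\<^sup>2 * Q0" unfolding q_def using Q0 by (simp add: power_mult_distrib)
  have "h * B1\<^sup>2 \<le> h * (p + q)\<^sup>2" using B10 B1pq h by (intro mult_left_mono power_mono) auto
  also have "\<dots> \<le> h * (2 * p\<^sup>2 + 2 * q\<^sup>2)" using h sq_sum_le'[of p q] by (intro mult_left_mono) auto
  also have "\<dots> = 2 * h * p\<^sup>2 + 8 * \<epsilon>\<^sup>2 * (h * Q0)" unfolding q2 by (simp add: algebra_simps)
  also have "h * Q0 = (6 * h + 2) / 256" unfolding Q0(2) using h by (simp add: field_simps)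
  also have "2 * h * p\<^sup>2 + 8 * \<epsilon>\<^sup>2 * ((6 * h + 2) / 256) \<le> 2 * (1/2) * (1/2)\<^sup>2 + 8 * 1 * ((6 * (1/2) + 2) / 256)"
  proof (intro add_mono mult_mono mult_left_mono divide_right_mono power_mono)
  qed (use h e p0 in \<open>auto simp: power_le_one\<close>)
  also have "\<dots> \<le> 1" by (simp add: power2_eq_square)
  finally have hB1: "h * B1\<^sup>2 \<le> 1" .
  have "aB B1 \<le> 2 * sqrt (\<epsilon>\<^sup>2 * ((6 + 2*h*B1\<^sup>2) / 256)) + h * \<epsilon>\<^sup>2 / 128"
    unfolding aB_def by (rule aa_phase[OF h e X B10])
  also have "sqrt (\<epsilon>\<^sup>2 * ((6 + 2*h*B1\<^sup>2) / 256)) \<le> sqrt (\<epsilon>\<^sup>2 * (1/16))"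
    using hB1 e by (intro real_sqrt_le_mono mult_left_mono) (auto simp: mult.assoc)
  also have "sqrt (\<epsilon>\<^sup>2 * (1/16)) = \<epsilon> / 4" using e by (simp add: real_sqrt_mult real_sqrt_divide)
  also have "h * \<epsilon>\<^sup>2 / 128 \<le> \<epsilon> / 128"
  proof -
    have "h * \<epsilon>\<^sup>2 \<le> 1 * \<epsilon>" using h e by (intro mult_mono) (auto simp: power2_eq_square mult_le_one)
    then show ?thesis by simp
  qed
  finally have "aB B1 \<le> 2 * (\<epsilon> / 4) + \<epsilon> / 128" by simp
  then show ?thesis unfolding B1_def using e by simp
qed


lemma main_bound:
  fixes c1 c2 :: real and S :: "nat set" and P :: "nat \<Rightarrow> nat pmf" and r :: "nat \<Rightarrow> real"
    and \<gamma> \<delta> \<epsilon> :: real and \<eta> :: "nat \<Rightarrow> real" and T :: nat and V0 :: "nat \<Rightarrow> real"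
  assumes c2: "0 < c2" "c2 \<le> c1" "c1 \<le> 1/16"
    and finS: "finite S" and neS: "S \<noteq> {}" and supp: "\<forall>s\<in>S. set_pmf (P s) \<subseteq> S"
    and r01: "\<forall>s\<in>S. 0 \<le> r s \<and> r s \<le> 1"
    and d: "0 < \<delta>" "\<delta> < 1" and e: "0 < \<epsilon>" "\<epsilon> \<le> 1" and g: "1/2 \<le> \<gamma>" "\<gamma> < 1" and T2: "T \<ge> 2"
    and eta01: "\<forall>t\<le>T. 0 < \<eta> t \<and> \<eta> t \<le> 1"
    and etab: "\<forall>t\<le>T. 1 / (1 + c1 * (1 - \<gamma>) * real T / (ln (real T))^2) \<le> \<eta> t \<and>
                   \<eta> t \<le> 1 / (1 + c2 * (1 - \<gamma>) * real t / (ln (real T))^2)"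
    and TH: "real T \<ge> (2000 / c2) * (ln (real T))^3 * ln (real (card S) * real T / \<delta>) / ((1 - \<gamma>)^3 * \<epsilon>^2)"
    and V0b: "\<forall>s\<in>S. 0 \<le> V0 s \<and> V0 s \<le> 1 / (1 - \<gamma>)"
  shows "measure_pmf.prob (samples S P T)
            {\<omega>. \<forall>s\<in>S. \<bar>td r \<gamma> \<eta> V0 \<omega> T s - Vstar P r \<gamma> s\<bar> \<le> \<epsilon>} \<ge> 1 - \<delta>"
proof -
  interpret tdl S P r \<gamma> \<eta> V0 T
    by unfold_locales (use finS neS supp r01 g eta01 V0b in auto)
  define h where "h = 1 - \<gamma>"
  define l where "l = ln (real T)"
  define N where "N = real (card S)"
  define Lam where "Lam = ln (N * real T / \<delta>)"
  define c3 where "c3 = 2000 / c2"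
  have h: "0 < h" "h \<le> 1/2" "h \<le> 1" using g h_def by auto
  have N1: "1 \<le> N" unfolding N_def using finS neS by (simp add: Suc_leI card_gt_0_iff)
  have Tr: "2 \<le> real T" using T2 by simp
  have l0: "0 < l" unfolding l_def using Tr by simp
  have lL: "l \<le> Lam"
  proof -
    have "real T \<le> N * real T / \<delta>"
    proof -
      have "real T * \<delta> \<le> real T * 1" using d Tr by (intro mult_left_mono) auto
      also have "\<dots> \<le> N * real T" using N1 Tr by (simp add: mult_right_mono)
      finally have "real T * \<delta> \<le> N * real T" .
      then show ?thesis using d by (simp add: field_simps)
    qed
    then show ?thesis unfolding l_def Lam_def using Tr by simp
  qed
  have c3b: "32000 \<le> c3"
  proof -
    have "2000 / (1/16) \<le> 2000 / c2" using c2 by (intro divide_left_mono) auto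
    then show ?thesis unfolding c3_def by simp
  qed
  have he0: "0 < h^3 * \<epsilon>^2" using h e by simp
  have he1: "h^3 * \<epsilon>^2 \<le> 1" using h e by (intro mult_le_one) (auto simp: power_le_one)
  have "c3 * l^3 * Lam / (h^3 * \<epsilon>^2) \<le> real T"
    unfolding c3_def l_def Lam_def N_def h_def by (rule TH)
  then have TH': "c3 * l^3 * Lam \<le> real T * (h^3 * \<epsilon>^2)"
    by (simp only: pos_divide_le_eq[OF he0])
  have l4: "c3 * l^4 \<le> real T"
  proof -
    have "l^4 = l^3 * l" by (simp add: power_Suc2[symmetric])
    then have "c3 * l^4 = c3 * l^3 * l" by (simp add: mult.assoc)
    also have "\<dots> \<le> c3 * l^3 * Lam" using lL c3b l0 by (intro mult_left_mono) auto
    also have "\<dots> \<le> real T * (h^3 * \<epsilon>^2)" by (rule TH')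
    also have "\<dots> \<le> real T * 1" using he1 Tr by (intro mult_left_mono) auto
    finally show ?thesis by simp
  qed
  have l23: "2/3 \<le> l"
  proof -
    have "ln (2::real) \<le> l" unfolding l_def using Tr by simp
    then show ?thesis using ln2_ge_two_thirds by simp
  qed
  have T8: "8 \<le> real T"
  proof -
    have "(2/3::real)^4 \<le> l^4" using l23 by (intro power_mono) auto
    then have "32000 * (2/3::real)^4 \<le> c3 * l^4" using c3b by (intro mult_mono) auto
    moreover have "8 \<le> 32000 * (2/3::real)^4" by (simp add: power_divide)
    ultimately show ?thesis using l4 by linarith
  qed
  have l1: "1 \<le> l"
  proof -
    have "exp 1 \<le> real T" using e_less_272 T8 by simp
    then have "ln (exp 1) \<le> l" unfolding l_def using Tr by (subst ln_le_cancel_iff) auto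
    then show ?thesis by simp
  qed
  have l3L: "1 \<le> l^3 * Lam"
  proof -
    have "1 * 1 \<le> l^3 * Lam" using l1 lL by (intro mult_mono one_le_power) auto
    then show ?thesis by simp
  qed

  have h3e: "h^3 * \<epsilon>^2 \<le> h * \<epsilon>"
  proof -
    have "h^2 * \<epsilon> \<le> 1" using h e by (intro mult_le_one) (auto simp: power_le_one)
    then have "(h * \<epsilon>) * (h^2 * \<epsilon>) \<le> (h * \<epsilon>) * 1" using h e by (intro mult_left_mono) auto
    then show ?thesis by (simp add: power2_eq_square power3_eq_cube algebra_simps)
  qed
  have h3h: "h^3 * \<epsilon>^2 \<le> h" using h3e h e by (smt (verit) mult_le_cancel_left2)
  have cT: "c3 \<le> real T * (h^3 * \<epsilon>^2)"
  proof -
    have "c3 * 1 \<le> c3 * (l^3 * Lam)" using l3L c3b by (intro mult_left_mono) auto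
    then show ?thesis using TH' by (simp add: mult.assoc)
  qed
  have hTe: "4 \<le> h * \<epsilon> * real T"
  proof -
    have "real T * (h^3 * \<epsilon>^2) \<le> real T * (h * \<epsilon>)" using h3e Tr by (intro mult_left_mono) auto
    then show ?thesis using cT c3b by (simp add: algebra_simps)
  qed
  have hT16: "16 * l \<le> h * real T"
  proof -
    have "l \<le> l^4" using l1 by (simp add: power_increasing[of 1 4 l, simplified])
    then have "16 * l \<le> c3 * l^4" using c3b l1 by (intro mult_mono) auto
    also have "c3 * l^4 \<le> c3 * l^3 * Lam"
    proof -
      have "l^4 = l^3 * l" by (simp add: power_Suc2[symmetric])
      then show ?thesis using lL c3b l0 by (simp add: mult.assoc mult_left_mono)
    qed
    also have "\<dots> \<le> real T * (h^3 * \<epsilon>^2)" by (rule TH')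
    also have "\<dots> \<le> real T * h" using h3h Tr by (intro mult_left_mono) auto
    finally show ?thesis by (simp add: mult.commute)
  qed
  define \<tau> where "\<tau> = T div 4"
  have tau: "2 * \<tau> \<le> T" unfolding \<tau>_def by simp
  have tau_up: "4 * real \<tau> \<le> real T"
  proof -
    have "4 * \<tau> \<le> T" unfolding \<tau>_def by simp
    then show ?thesis by linarith
  qed
  have tau_lo: "real T / 8 \<le> real \<tau>"
  proof -
    have "T \<le> 4 * \<tau> + 3" unfolding \<tau>_def by simp
    then have "real T \<le> 4 * real \<tau> + 3" by linarith
    then show ?thesis using T8 by simp
  qed

  define eh where "eh = 2 * l^2 / (c2 * h * real T)"
  have eh0: "0 < eh" unfolding eh_def using l0 c2 h Tr by simp
  have ehb: "\<eta> i \<le> eh" if i: "T - 2*\<tau> < i" "i \<le> T" for i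
  proof -
    have iT: "real T / 2 \<le> real i"
    proof -
      have "T - 2 * \<tau> < i" by (rule i(1))
      then have "real T - 2 * real \<tau> < real i" using tau by linarith
      then show ?thesis using tau_up by linarith
    qed
    have ip: "0 < real i" using iT Tr by linarith
    define x where "x = c2 * h * real i / l^2"
    have x0: "0 < x" unfolding x_def using c2 h ip l0 by simp
    have "\<eta> i \<le> 1 / (1 + c2 * (1 - \<gamma>) * real i / (ln (real T))^2)" using etab i(2) by auto
    also have "\<dots> = 1 / (1 + x)" unfolding x_def h_def l_def by simp
    also have "\<dots> \<le> 1 / x" using x0 by (intro divide_left_mono) auto
    also have "1 / x = l^2 / (c2 * h * real i)" unfolding x_def by simp
    also have "\<dots> \<le> l^2 / (c2 * h * (real T / 2))"
      using c2 h iT l0 Tr by (intro divide_left_mono mult_left_mono mult_pos_pos) auto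
    also have "\<dots> = eh" unfolding eh_def by (simp add: field_simps)
    finally show ?thesis .
  qed
  define lo where "lo = 1 / (1 + c1 * h * real T / l^2)"
  have lo0: "0 \<le> lo" unfolding lo_def using c2 h Tr l0 by simp
  have lob: "\<And>j. j \<le> T \<Longrightarrow> lo \<le> \<eta> j" using etab unfolding lo_def h_def l_def by auto
  have decay: "l \<le> lo * h * real \<tau>"
  proof -
    have d0: "0 < 1 + c1 * h * real T / l^2" using c2 h Tr l0 by (simp add: add_pos_nonneg)
    have a0: "c1 * h * real T / l \<le> (1/16) * h * real T / 1"
      using c2 h Tr l1 by (intro frac_le mult_right_mono mult_nonneg_nonneg) auto
    have a: "l + c1 * h * real T / l \<le> h * real T / 8" using a0 hT16 by linarith
    have "l * (1 + c1 * h * real T / l^2) = l + c1 * h * real T / l" using l0 by (simp add: field_simps power2_eq_square)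
    also have "\<dots> \<le> h * real T / 8" by (rule a)
    also have "\<dots> \<le> h * real \<tau>" using tau_lo h by (simp add: mult_left_mono)
    finally have "l * (1 + c1 * h * real T / l^2) \<le> h * real \<tau>" .
    then show ?thesis unfolding lo_def using d0 by (simp add: field_simps)
  qed
  have Dc: "Rs t0 \<tau> * (1/(1-\<gamma>)) \<le> \<epsilon>/4" if t0: "t0 + \<tau> \<le> T" for t0
  proof -
    have "Rs t0 \<tau> \<le> exp (- (lo * (1-\<gamma>) * real \<tau>))" by (rule Rs_le_exp[OF t0 lo0 lob])
    also have "\<dots> \<le> exp (- l)" using decay unfolding h_def by simp
    also have "exp (- l) = 1 / real T" unfolding l_def using Tr by (simp add: exp_minus inverse_eq_divide)
    finally have "Rs t0 \<tau> * (1/h) \<le> (1 / real T) * (1/h)" using h by (intro mult_right_mono) auto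
    also have "\<dots> \<le> \<epsilon> / 4" using hTe h e Tr by (simp add: field_simps)
    finally show ?thesis unfolding h_def .
  qed

  define y where "y = N * real T / \<delta>"
  have yT: "real T \<le> y"
  proof -
    have "real T * \<delta> \<le> real T * 1" using d Tr by (intro mult_left_mono) auto
    also have "\<dots> \<le> N * real T" using N1 Tr by (simp add: mult_right_mono)
    finally show ?thesis unfolding y_def using d by (simp add: field_simps)
  qed
  have y2: "2 \<le> y" using yT T8 by simp
  define L where "L = ln (4 * N * real T / \<delta>)"
  have Ly: "L = ln (4 * y)" unfolding L_def y_def by (simp add: mult.assoc)
  have L0: "0 \<le> L" unfolding Ly using y2 by simp
  have expL: "exp (- L) = \<delta> / (4 * N * real T)"
  proof -
    have pos: "0 < 4 * N * real T / \<delta>" using N1 Tr d by simp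
    have "exp (- L) = 1 / exp L" by (simp add: exp_minus inverse_eq_divide)
    also have "exp L = 4 * N * real T / \<delta>" unfolding L_def using pos by simp
    finally show ?thesis by simp
  qed
  have cnt: "(2 * real \<tau> + 4) * real (card S) * exp (-L) \<le> \<delta>"
  proof -
    have "(2 * real \<tau> + 4) * real (card S) * exp (-L) = (2 * real \<tau> + 4) * \<delta> / (4 * real T)"
      unfolding expL N_def[symmetric] using N1 Tr by (simp add: field_simps)
    also have "\<dots> \<le> (4 * real T) * \<delta> / (4 * real T)"
      using tau_up Tr d by (intro divide_right_mono mult_right_mono) auto
    also have "\<dots> = \<delta>" using Tr by simp
    finally show ?thesis .
  qed
  have L3: "L \<le> 3 * Lam"
  proof -
    have "4 * y \<le> y ^ 3"
    proof -
      have "2 * 2 \<le> y * y" using y2 by (intro mult_mono) auto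
      then have "4 * y \<le> (y * y) * y" using y2 by (intro mult_right_mono) auto
      then show ?thesis by (simp add: power3_eq_cube)
    qed
    then have "ln (4 * y) \<le> ln (y ^ 3)" using y2 by (subst ln_le_cancel_iff) auto
    also have "ln (y ^ 3) = 3 * ln y" using y2 by (simp add: ln_realpow)
    finally show ?thesis unfolding Ly Lam_def y_def .
  qed
  define X where "X = L * eh"
  have X0: "0 \<le> X" unfolding X_def using L0 eh0 by simp
  have Xle: "X \<le> h\<^sup>2 * \<epsilon>\<^sup>2 / 256"
  proof -
    have Lam0: "0 \<le> Lam" using lL l0 by simp
    have "X \<le> 3 * Lam * eh" unfolding X_def using L3 eh0 by (intro mult_right_mono) auto
    also have "\<dots> = 6 * (Lam * l^2) / (c2 * h * real T)" unfolding eh_def by (simp add: field_simps)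
    also have "\<dots> \<le> h\<^sup>2 * \<epsilon>\<^sup>2 / 256"
    proof -
      have "Lam * l^2 \<le> Lam * l^3"
        using Lam0 l1 by (intro mult_left_mono power_increasing) auto
      also have "Lam * l^3 \<le> c2 * (real T * (h^3 * \<epsilon>^2)) / 2000"
        using TH' c2 unfolding c3_def by (simp add: field_simps)
      finally have "1536 * (Lam * l^2) \<le> 1536 * (c2 * (real T * (h^3 * \<epsilon>^2)) / 2000)" by (rule mult_left_mono) simp
      also have "\<dots> \<le> c2 * (real T * (h^3 * \<epsilon>^2))" using c2 Tr he0 by (simp add: mult.commute)
      finally have k: "1536 * (Lam * l^2) \<le> c2 * (real T * (h^3 * \<epsilon>^2))" .
      have pos: "0 < c2 * h * real T" using c2 h Tr by simp
      show ?thesis using k pos by (simp add: field_simps power2_eq_square power3_eq_cube)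
    qed
    finally show ?thesis .
  qed
  have aaX: "aa L eh B = 2 * sqrt (X * (6/h\<^sup>2 + 2*B\<^sup>2/h)) + 2 * X / h" for B
    unfolding aa_def X_def h_def using eh0 by (simp add: mult.assoc)
  have fin: "\<epsilon>/4 + aa L eh (\<epsilon>/4 + aa L eh (1/(1-\<gamma>))) \<le> \<epsilon>"
    using final_numeric[OF h(1) h(2) e X0 Xle] unfolding aaX h_def[symmetric] by simp
  have "measure_pmf.prob (samples S P T) {\<omega>. \<forall>s\<in>S. \<bar>td r \<gamma> \<eta> V0 \<omega> T s - Vs s\<bar> \<le> \<epsilon>} \<ge> 1 - \<delta>"
    by (rule assemble[OF tau eh0 ehb Dc L0 fin cnt]) auto
  then show ?thesis unfolding Vs_def .
qed


theorem theorem1: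
  shows "\<exists>c0::real. c0 > 0 \<and>
    (\<forall>c1 c2::real. 0 < c2 \<and> c2 \<le> c1 \<and> c1 \<le> c0 \<longrightarrow>
      (\<exists>c3::real. c3 > 0 \<and>
        (\<forall>(S::nat set) (P::nat \<Rightarrow> nat pmf) (r::nat \<Rightarrow> real) (\<gamma>::real) (\<delta>::real) (\<epsilon>::real)
           (\<eta>::nat \<Rightarrow> real) (T::nat) (V0::nat \<Rightarrow> real).
          finite S \<and> S \<noteq> {} \<and>
          (\<forall>s\<in>S. set_pmf (P s) \<subseteq> S) \<and>
          (\<forall>s\<in>S. 0 \<le> r s \<and> r s \<le> 1) \<and>
          0 < \<delta> \<and> \<delta> < 1 \<and> 0 < \<epsilon> \<and> \<epsilon> \<le> 1 \<and> 1/2 \<le> \<gamma> \<and> \<gamma> < 1 \<and>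
          T \<ge> 2 \<and>
          (\<forall>t\<le>T. 0 < \<eta> t \<and> \<eta> t \<le> 1) \<and>
          (\<forall>t\<le>T. 1 / (1 + c1 * (1 - \<gamma>) * real T / (ln (real T))^2) \<le> \<eta> t \<and>
                   \<eta> t \<le> 1 / (1 + c2 * (1 - \<gamma>) * real t / (ln (real T))^2)) \<and>
          real T \<ge> c3 * (ln (real T))^3 * ln (real (card S) * real T / \<delta>)
                     / ((1 - \<gamma>)^3 * \<epsilon>^2) \<and>
          (\<forall>s\<in>S. 0 \<le> V0 s \<and> V0 s \<le> 1 / (1 - \<gamma>))
          \<longrightarrow>
          measure_pmf.prob (samples S P T)
            {\<omega>. \<forall>s\<in>S. \<bar>td r \<gamma> \<eta> V0 \<omega> T s - Vstar P r \<gamma> s\<bar> \<le> \<epsilon>} \<ge> 1 - \<delta>)))"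
  apply (rule exI[of _ "1/16"])
  apply (intro conjI allI impI)
   apply simp
  apply (rule_tac x="2000/c2" in exI)
  apply (elim conjE)
  apply (intro conjI allI impI)
   apply simp
  apply (elim conjE)
  apply (rule main_bound)
                  apply assumption+
  done

end
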